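(* Let $\Pi$ be the problem of properly $3$-coloring the nodes of rooted binary trees (without inputs). Then there exists an LCL problem $\Pi'$ on rooted binary trees with the same asymptotic round complexity as $\Pi$ in the LOCAL model, such that every solution of $\Pi'$ is also a solution of $\Pi$, and $\Pi'$ is $O(1)$-mendable.
   Context: In a rooted tree each node knows which neighbor is its parent; in a rooted binary tree each node has at most two children. A proper $3$-coloring assigns to each node a color in $\{1,2,3\}$ with adjacent nodes receiving different colors. A locally verifiable problem on a graph family is given by a set $\Gamma$ of output labels (here no inputs) and a verifier $\psi$ with verification radius $r$: $\psi(G,\lambda,v)\in\{\text{happy},\text{unhappy}\}$ depends only on the radius-$r$ neighborhood of $v$ (structure and outputs, up to isomorphism), and $\lambda$ is a solution if $\psi$ is happy everywhere; it is an LCL problem if $\Gamma$ is finite and degrees are bounded. Partial labelings are maps $\lambda:V\to\Gamma\cup\{\bot\}$; the relaxed verifier $\psi^*$ is happy at $v$ if some node within distance $r$ of $v$ has label $\bot$, and otherwise $\psi^*(G,\lambda,v)=\psi(G,\lambda',v)$ for any completion $\lambda'$ agreeing with $\lambda$ on the radius-$r$ neighborhood of $v$; $\psi^*$ accepts $\lambda$ if happy everywhere. Given $\lambda$ accepted by $\psi^*$ and node $v$, a $t$-mend of $\lambda$ at $v$ is a partial labeling $\mu$ accepted by $\psi^*$ with $\mu(v)\neq\bot$, $\mu(u)=\bot\Rightarrow\lambda(u)=\bot$, and $\mu(u)\neq\lambda(u)\Rightarrow \mathrm{dist}(u,v)\le t$. $\Pi'$ is $O(1)$-mendable if for some $r$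 there is a radius-$r$ verifier for $\Pi'$ (accepting exactly its solutions) and a constant $t$ such that on every graph of the family, for every partial labeling accepted by $\psi^*$ and every node $v$, a $t$-mend at $v$ exists. LOCAL model: nodes with unique identifiers communicate along edges in synchronous rounds with unbounded messages; round complexity is the number of rounds needed to output a valid solution. *)

theory Defs
  imports Main "HOL-Library.Landau_Symbols"
begin

text \<open>A (finite) rooted binary tree is given by a finite vertex set V of naturals and a
parent map par (None = no parent). Vertex names double as unique identifiers in the
LOCAL model.\<close>

definition pstep :: "(nat \<Rightarrow> nat option) \<Rightarrow> nat \<Rightarrow> nat" where
  "pstep par v = (case par v of Some p \<Rightarrow> p | None \<Rightarrow> v)"

definition rooted_binary_tree :: "nat set \<Rightarrow> (nat \<Rightarrow> nat option) \<Rightarrow> bool" where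
  "rooted_binary_tree V par \<longleftrightarrow>
     finite V \<and> V \<noteq> {} \<and>
     (\<forall>v. v \<notin> V \<longrightarrow> par v = None) \<and>
     (\<forall>v\<in>V. \<forall>p. par v = Some p \<longrightarrow> p \<in> V) \<and>
     (\<exists>!\<rho>. \<rho> \<in> V \<and> par \<rho> = None) \<and>
     (\<forall>v\<in>V. \<exists>k \<rho>. \<rho> \<in> V \<and> par \<rho> = None \<and> (pstep par ^^ k) v = \<rho>) \<and>
     (\<forall>v\<in>V. card {u\<in>V. par u = Some v} \<le> 2)"

definition adj :: "(nat \<Rightarrow> nat option) \<Rightarrow> nat \<Rightarrow> nat \<Rightarrow> bool" where
  "adj par u v \<longleftrightarrow> par u = Some v \<or> par v = Some u"

inductive walk_le :: "(nat \<Rightarrow> nat option) \<Rightarrow> nat \<Rightarrow> nat \<Rightarrow> nat \<Rightarrow> bool"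
  for par where
  refl: "walk_le par k u u"
| step: "walk_le par k u v \<Longrightarrow> adj par v w \<Longrightarrow> walk_le par (Suc k) u w"

definition ball :: "(nat \<Rightarrow> nat option) \<Rightarrow> nat \<Rightarrow> nat \<Rightarrow> nat set" where
  "ball par v k = {u. walk_le par k v u}"

type_synonym problem = "nat set \<Rightarrow> (nat \<Rightarrow> nat option) \<Rightarrow> (nat \<Rightarrow> nat) \<Rightarrow> bool"
type_synonym verifier = "nat set \<Rightarrow> (nat \<Rightarrow> nat option) \<Rightarrow> (nat \<Rightarrow> nat) \<Rightarrow> nat \<Rightarrow> bool"

definition three_col :: problem where
  "three_col V par lab \<longleftrightarrow>
     (\<forall>v\<in>V. lab v \<in> {1,2,3}) \<and> (\<forall>v\<in>V. \<forall>u. par v = Some u \<longrightarrow> lab u \<noteq> lab v)"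

definition ball_iso ::
  "nat \<Rightarrow> (nat \<Rightarrow> nat option) \<Rightarrow> (nat \<Rightarrow> 'b) \<Rightarrow> nat \<Rightarrow> (nat \<Rightarrow> nat option) \<Rightarrow> (nat \<Rightarrow> 'b) \<Rightarrow> nat \<Rightarrow> bool"
  where
  "ball_iso r par lab v par' lab' v' \<longleftrightarrow>
     (\<exists>f. bij_betw f (ball par v r) (ball par' v' r) \<and> f v = v' \<and>
          (\<forall>u\<in>ball par v r. \<forall>w\<in>ball par v r. (par u = Some w) = (par' (f u) = Some (f w))) \<and>
          (\<forall>u\<in>ball par v r. lab u = lab' (f u)))"

definition is_verifier :: "nat \<Rightarrow> verifier \<Rightarrow> bool" where
  "is_verifier r \<psi> \<longleftrightarrow>
     (\<forall>V par lab v V' par' lab' v'.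
        rooted_binary_tree V par \<longrightarrow> rooted_binary_tree V' par' \<longrightarrow> v \<in> V \<longrightarrow> v' \<in> V' \<longrightarrow>
        ball_iso r par lab v par' lab' v' \<longrightarrow> \<psi> V par lab v = \<psi> V' par' lab' v')"

definition verifies :: "nat set \<Rightarrow> problem \<Rightarrow> verifier \<Rightarrow> bool" where
  "verifies \<Gamma> \<Pi> \<psi> \<longleftrightarrow>
     (\<forall>V par lab. rooted_binary_tree V par \<longrightarrow>
        (\<Pi> V par lab \<longleftrightarrow> (\<forall>v\<in>V. lab v \<in> \<Gamma>) \<and> (\<forall>v\<in>V. \<psi> V par lab v)))"

definition is_LCL :: "nat set \<Rightarrow> problem \<Rightarrow> bool" where
  "is_LCL \<Gamma> \<Pi> \<longleftrightarrow> finite \<Gamma> \<and> (\<exists>r \<psi>. is_verifier r \<psi> \<and> verifies \<Gamma> \<Pi> \<psi>)"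

definition relaxed_happy ::
  "nat set \<Rightarrow> nat \<Rightarrow> verifier \<Rightarrow> nat set \<Rightarrow> (nat \<Rightarrow> nat option) \<Rightarrow> (nat \<Rightarrow> nat option) \<Rightarrow> nat \<Rightarrow> bool"
  where
  "relaxed_happy \<Gamma> r \<psi> V par \<mu> v \<longleftrightarrow>
     (\<exists>u\<in>ball par v r. \<mu> u = None) \<or>
     (\<forall>lab'. (\<forall>u\<in>V. lab' u \<in> \<Gamma>) \<longrightarrow> (\<forall>u\<in>ball par v r. \<mu> u = Some (lab' u)) \<longrightarrow> \<psi> V par lab' v)"

definition relaxed_accepts ::
  "nat set \<Rightarrow> nat \<Rightarrow> verifier \<Rightarrow> nat set \<Rightarrow> (nat \<Rightarrow> nat option) \<Rightarrow> (nat \<Rightarrow> nat option) \<Rightarrow> bool"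
  where
  "relaxed_accepts \<Gamma> r \<psi> V par \<mu> \<longleftrightarrow> (\<forall>v\<in>V. relaxed_happy \<Gamma> r \<psi> V par \<mu> v)"

definition partial_labeling :: "nat set \<Rightarrow> nat set \<Rightarrow> (nat \<Rightarrow> nat option) \<Rightarrow> bool" where
  "partial_labeling \<Gamma> V \<mu> \<longleftrightarrow> (\<forall>u\<in>V. \<mu> u = None \<or> (\<exists>g\<in>\<Gamma>. \<mu> u = Some g))"

definition is_mend ::
  "nat set \<Rightarrow> nat \<Rightarrow> verifier \<Rightarrow> nat \<Rightarrow> nat set \<Rightarrow> (nat \<Rightarrow> nat option)
     \<Rightarrow> (nat \<Rightarrow> nat option) \<Rightarrow> nat \<Rightarrow> (nat \<Rightarrow> nat option) \<Rightarrow> bool"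
  where
  "is_mend \<Gamma> r \<psi> t V par \<mu> v \<mu>' \<longleftrightarrow>
     partial_labeling \<Gamma> V \<mu>' \<and> relaxed_accepts \<Gamma> r \<psi> V par \<mu>' \<and> \<mu>' v \<noteq> None \<and>
     (\<forall>u\<in>V. \<mu>' u = None \<longrightarrow> \<mu> u = None) \<and>
     (\<forall>u\<in>V. \<mu>' u \<noteq> \<mu> u \<longrightarrow> u \<in> ball par v t)"

definition O1_mendable :: "nat set \<Rightarrow> problem \<Rightarrow> bool" where
  "O1_mendable \<Gamma> \<Pi> \<longleftrightarrow>
     (\<exists>r \<psi> t. is_verifier r \<psi> \<and> verifies \<Gamma> \<Pi> \<psi> \<and>
        (\<forall>V par \<mu> v. rooted_binary_tree V par \<longrightarrow> partial_labeling \<Gamma> V \<mu> \<longrightarrow>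
            relaxed_accepts \<Gamma> r \<psi> V par \<mu> \<longrightarrow> v \<in> V \<longrightarrow>
            (\<exists>\<mu>'. is_mend \<Gamma> r \<psi> t V par \<mu> v \<mu>')))"

definition local_instance :: "nat \<Rightarrow> nat \<Rightarrow> nat set \<Rightarrow> (nat \<Rightarrow> nat option) \<Rightarrow> bool" where
  "local_instance c n V par \<longleftrightarrow> rooted_binary_tree V par \<and> card V = n \<and> V \<subseteq> {1..n ^ c}"

text \<open>What a node v knows after T rounds: the nodes (with identifiers) within distance T
and the parent relation among them.\<close>
definition view :: "(nat \<Rightarrow> nat option) \<Rightarrow> nat \<Rightarrow> nat \<Rightarrow> nat set \<times> (nat \<Rightarrow> nat option)" where
  "view par T v =
     (ball par v T,
      (\<lambda>u. if u \<in> ball par v T then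
              (case par u of Some p \<Rightarrow> if p \<in> ball par v T then Some p else None | None \<Rightarrow> None)
            else None))"

definition solvable_in :: "problem \<Rightarrow> nat \<Rightarrow> nat \<Rightarrow> nat \<Rightarrow> bool" where
  "solvable_in \<Pi> c n T \<longleftrightarrow>
     (\<exists>L :: nat set \<Rightarrow> (nat \<Rightarrow> nat option) \<Rightarrow> nat \<Rightarrow> nat.
        (\<forall>V par V' par' v. local_instance c n V par \<longrightarrow> local_instance c n V' par' \<longrightarrow> v \<in> V \<longrightarrow> v \<in> V' \<longrightarrow>
            view par T v = view par' T v \<longrightarrow> L V par v = L V' par' v) \<and>
        (\<forall>V par. local_instance c n V par \<longrightarrow> \<Pi> V par (L V par)))"

definition round_complexity :: "problem \<Rightarrow> nat \<Rightarrow> nat \<Rightarrow> nat" where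
  "round_complexity \<Pi> c n = (LEAST T. solvable_in \<Pi> c n T)"

definition same_asymptotic_complexity :: "problem \<Rightarrow> problem \<Rightarrow> nat \<Rightarrow> bool" where
  "same_asymptotic_complexity \<Pi>1 \<Pi>2 c \<longleftrightarrow>
     (\<forall>n. \<exists>T. solvable_in \<Pi>1 c n T) \<and> (\<forall>n. \<exists>T. solvable_in \<Pi>2 c n T) \<and>
     (\<lambda>n. real (round_complexity \<Pi>1 c n)) \<in> \<Theta>(\<lambda>n. real (round_complexity \<Pi>2 c n))"

end

theory Submission
  imports Defs
begin

lemma rbt_par_in:
  assumes "rooted_binary_tree V par" "par v = Some p"
  shows "v \<in> V" "p \<in> V"
proof -
  show "v \<in> V" using assms unfolding rooted_binary_tree_def by force
  then show "p \<in> V" using assms unfolding rooted_binary_tree_def by blast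
qed

lemma walk_le_0: "walk_le par 0 u w \<Longrightarrow> w = u"
  by (cases rule: walk_le.cases) auto

lemma walk_le_1: "walk_le par (Suc 0) w u \<longleftrightarrow> u = w \<or> adj par w u"
proof
  assume "walk_le par (Suc 0) w u"
  then show "u = w \<or> adj par w u"
    by (cases rule: walk_le.cases) (auto dest: walk_le_0)
next
  assume "u = w \<or> adj par w u"
  then show "walk_le par (Suc 0) w u"
    by (metis walk_le.refl walk_le.step)
qed

lemma walk_mono: "walk_le par k a b \<Longrightarrow> walk_le par (k+j) a b"
  by (induction k a b rule: walk_le.induct) (auto intro: walk_le.intros)

lemma walk_trans: "walk_le par j b c \<Longrightarrow> walk_le par k a b \<Longrightarrow> walk_le par (k+j) a c"
proof (induction j b c rule: walk_le.induct)
  case (refl k' u)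
  then show ?case by (rule walk_mono)
next
  case (step k' u v w)
  then show ?case by (metis add_Suc_right walk_le.step)
qed

definition depth :: "(nat \<Rightarrow> nat option) \<Rightarrow> nat \<Rightarrow> nat" where
  "depth par v = (LEAST k. par ((pstep par ^^ k) v) = None)"

lemma reach_root:
  assumes "rooted_binary_tree V par" "v \<in> V"
  shows "\<exists>k. par ((pstep par ^^ k) v) = None"
  using assms unfolding rooted_binary_tree_def by blast

lemma pstep_Some: "par v = Some p \<Longrightarrow> pstep par v = p"
  unfolding pstep_def by simp

lemma pstep_None: "par v = None \<Longrightarrow> pstep par v = v"
  unfolding pstep_def by simp

lemma depth_par:
  assumes "rooted_binary_tree V par" "par v = Some p"
  shows "depth par v = Suc (depth par p)"
proof -
  have pV: "p \<in> V" using rbt_par_in[OF assms] by simp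
  obtain k where k: "par ((pstep par ^^ k) p) = None" using reach_root[OF assms(1) pV] by blast
  have it: "(pstep par ^^ Suc m) v = (pstep par ^^ m) p" for m
    unfolding funpow_Suc_right comp_def using pstep_Some[of par v p] assms(2) by simp
  have "par ((pstep par ^^ Suc k) v) = None" using k it by simp
  moreover have "\<not> par ((pstep par ^^ 0) v) = None" using assms(2) by simp
  ultimately have "(LEAST n. par ((pstep par ^^ n) v) = None) = Suc (LEAST m. par ((pstep par ^^ Suc m) v) = None)"
    by (rule Least_Suc)
  then show ?thesis unfolding depth_def it by simp
qed

fun Reg :: "(nat \<Rightarrow> nat option) \<Rightarrow> nat \<Rightarrow> nat \<Rightarrow> nat set" where
  "Reg par y 0 = {y}"
| "Reg par y (Suc d) = insert y (\<Union>c\<in>{c. par c = Some y}. Reg par c d)"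

lemma Reg_self: "y \<in> Reg par y d"
  by (cases d) auto

lemma Reg_F1:
  assumes "rooted_binary_tree V par"
  shows "u \<in> Reg par y d \<Longrightarrow> \<exists>k\<le>d. (pstep par ^^ k) u = y \<and> depth par u = depth par y + k"
proof (induction d arbitrary: y)
  case 0
  then show ?case by simp
next
  case (Suc d)
  show ?case
  proof (cases "u = y")
    case True
    then show ?thesis by (intro exI[of _ 0]) simp
  next
    case False
    then obtain c where c: "par c = Some y" "u \<in> Reg par c d" using Suc.prems by auto
    from Suc.IH[OF c(2)] obtain k where k: "k \<le> d" "(pstep par ^^ k) u = c" "depth par u = depth par c + k" by blast
    have "(pstep par ^^ Suc k) u = y" using k(2) c(1) by (simp add: pstep_Some)
    moreover have "depth par u = depth par y + Suc k" using k(3) depth_par[OF assms c(1)] by simp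
    ultimately show ?thesis using k(1) by (intro exI[of _ "Suc k"]) simp
  qed
qed

lemma Reg_walk: "u \<in> Reg par y d \<Longrightarrow> walk_le par d y u"
proof (induction d arbitrary: y)
  case 0
  then show ?case by (simp add: walk_le.refl)
next
  case (Suc d)
  show ?case
  proof (cases "u = y")
    case True
    then show ?thesis by (simp add: walk_le.refl)
  next
    case False
    then obtain c where c: "par c = Some y" "u \<in> Reg par c d" using Suc.prems by auto
    have "walk_le par (Suc 0) y c" using c(1) unfolding walk_le_1 adj_def by simp
    from walk_trans[OF Suc.IH[OF c(2)] this] show ?thesis by simp
  qed
qed

lemma Reg_up: "u \<in> Reg par y d \<Longrightarrow> u \<noteq> y \<Longrightarrow> par u = Some w \<Longrightarrow> w \<in> Reg par y d"
proof (induction d arbitrary: y)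
  case 0
  then show ?case by simp
next
  case (Suc d)
  then obtain c where c: "par c = Some y" "u \<in> Reg par c d" by auto
  show ?case
  proof (cases "u = c")
    case True
    then show ?thesis using c Suc.prems by simp
  next
    case False
    then have "w \<in> Reg par c d" using Suc.IH[OF c(2) False Suc.prems(3)] by simp
    then show ?thesis using c(1) by auto
  qed
qed

lemma Reg_child: "w \<in> Reg par y d \<Longrightarrow> par u = Some w \<Longrightarrow> u \<in> Reg par y (Suc d)"
proof (induction d arbitrary: y)
  case 0
  then show ?case by (auto intro: Reg_self)
next
  case (Suc d)
  show ?case
  proof (cases "w = y")
    case True
    then show ?thesis using Suc.prems by (auto intro: Reg_self)
  next
    case False
    then obtain c where c: "par c = Some y" "w \<in> Reg par c d" using Suc.prems by auto
    have "u \<in> Reg par c (Suc d)" using Suc.IH[OF c(2) Suc.prems(2)] .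
    then show ?thesis using c(1) by (metis (mono_tags, lifting) Reg.simps(2) UN_iff insertCI mem_Collect_eq)
  qed
qed

lemma Reg_V:
  assumes "rooted_binary_tree V par" "y \<in> V"
  shows "u \<in> Reg par y d \<Longrightarrow> u \<in> V"
  using assms(2)
proof (induction d arbitrary: y)
  case 0
  then show ?case by simp
next
  case (Suc d)
  show ?case
  proof (cases "u = y")
    case True
    then show ?thesis using Suc by simp
  next
    case False
    then obtain c where c: "par c = Some y" "u \<in> Reg par c d" using Suc.prems by auto
    then show ?thesis using Suc.IH rbt_par_in[OF assms(1) c(1)] by blast
  qed
qed

lemma Reg_disj:
  assumes "rooted_binary_tree V par" "par c1 = Some y" "par c2 = Some y"
    "u \<in> Reg par c1 d" "u \<in> Reg par c2 d'"
  shows "c1 = c2"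
proof -
  obtain k1 where k1: "(pstep par ^^ k1) u = c1" "depth par u = depth par c1 + k1"
    using Reg_F1[OF assms(1) assms(4)] by blast
  obtain k2 where k2: "(pstep par ^^ k2) u = c2" "depth par u = depth par c2 + k2"
    using Reg_F1[OF assms(1) assms(5)] by blast
  have "depth par c1 = depth par c2" using depth_par[OF assms(1) assms(2)] depth_par[OF assms(1) assms(3)] by simp
  then have "k1 = k2" using k1 k2 by simp
  then show ?thesis using k1 k2 by simp
qed

lemma Reg_depth:
  assumes "rooted_binary_tree V par" "u \<in> Reg par y d"
  shows "depth par y \<le> depth par u"
  using Reg_F1[OF assms] by auto


definition Gam :: "nat set" where "Gam = {1,2,3}"

definition Psi :: "(nat \<Rightarrow> nat option) \<Rightarrow> (nat \<Rightarrow> nat option) \<Rightarrow> nat \<Rightarrow> bool" where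
  "Psi par \<mu> w \<longleftrightarrow> (\<forall>u. par u = Some w \<longrightarrow> \<mu> u \<noteq> \<mu> w) \<and>
     ((\<exists>u u'. par u = Some w \<and> par u' = Some w \<and> \<mu> u \<noteq> \<mu> u') \<longrightarrow> \<mu> w = Some 3)"

definition vac :: "(nat \<Rightarrow> nat option) \<Rightarrow> (nat \<Rightarrow> nat option) \<Rightarrow> nat \<Rightarrow> bool" where
  "vac par \<mu> w \<longleftrightarrow> \<mu> w = None \<or> (\<exists>p. par w = Some p \<and> \<mu> p = None) \<or> (\<exists>u. par u = Some w \<and> \<mu> u = None)"

definition good :: "(nat \<Rightarrow> nat option) \<Rightarrow> (nat \<Rightarrow> nat option) \<Rightarrow> nat \<Rightarrow> bool" where
  "good par \<mu> w \<longleftrightarrow> vac par \<mu> w \<or> Psi par \<mu> w"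

definition psi :: verifier where
  "psi V par lab w = Psi par (\<lambda>u. Some (lab u)) w"

definition PiP :: problem where
  "PiP V par lab \<longleftrightarrow> (\<forall>v\<in>V. lab v \<in> Gam) \<and> (\<forall>v\<in>V. psi V par lab v)"

lemma Psi_cong:
  assumes "\<mu>a w = \<mu>b w" "\<And>u. par u = Some w \<Longrightarrow> \<mu>a u = \<mu>b u"
  shows "Psi par \<mu>a w = Psi par \<mu>b w"
  unfolding Psi_def using assms by metis

lemma vac_cong:
  assumes "\<And>u. (\<mu>a u = None) = (\<mu>b u = None)"
  shows "vac par \<mu>a w = vac par \<mu>b w"
  unfolding vac_def using assms by metis

lemma good_cong:
  assumes "\<And>u. (\<mu>a u = None) = (\<mu>b u = None)" "\<mu>a w = \<mu>b w" "\<And>u. par u = Some w \<Longrightarrow> \<mu>a u = \<mu>b u"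
  shows "good par \<mu>a w = good par \<mu>b w"
  unfolding good_def using vac_cong[OF assms(1)] Psi_cong[where par=par and \<mu>a=\<mu>a and \<mu>b=\<mu>b and w=w, OF assms(2,3)] by simp

lemma good_cong2:
  assumes "\<mu>a w = \<mu>b w" "\<And>p. par w = Some p \<Longrightarrow> \<mu>a p = \<mu>b p" "\<And>u. par u = Some w \<Longrightarrow> \<mu>a u = \<mu>b u"
  shows "good par \<mu>a w = good par \<mu>b w"
proof -
  have "vac par \<mu>a w = vac par \<mu>b w" unfolding vac_def using assms by metis
  then show ?thesis unfolding good_def using Psi_cong[where par=par and \<mu>a=\<mu>a and \<mu>b=\<mu>b and w=w, OF assms(1,3)] by simp
qed

lemma ball1: "ball par w (Suc 0) = {u. u = w \<or> par w = Some u \<or> par u = Some w}"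
  unfolding ball_def walk_le_1 adj_def by auto

lemma rh_iff:
  assumes "partial_labeling Gam V \<mu>" "rooted_binary_tree V par" "w \<in> V"
  shows "relaxed_happy Gam 1 psi V par \<mu> w \<longleftrightarrow> good par \<mu> w"
proof -
  have N: "(\<exists>u\<in>ball par w 1. \<mu> u = None) \<longleftrightarrow> vac par \<mu> w"
    unfolding vac_def using ball1[of par w] by auto
  show ?thesis
  proof (cases "vac par \<mu> w")
    case True
    then show ?thesis unfolding relaxed_happy_def good_def using N by simp
  next
    case False
    have lab: "\<And>u. u \<in> ball par w 1 \<Longrightarrow> \<mu> u = Some (the (\<mu> u))"
      using False N by auto
    have A: "Psi par \<mu> w = psi V par lab' w" if "\<forall>u\<in>ball par w 1. \<mu> u = Some (lab' u)" for lab'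
      unfolding psi_def
      by (rule Psi_cong) (use that ball1[of par w] in auto)
    show ?thesis
    proof
      assume rh: "relaxed_happy Gam 1 psi V par \<mu> w"
      define lab' where "lab' u = (case \<mu> u of Some g \<Rightarrow> g | None \<Rightarrow> 1)" for u
      have "\<forall>u\<in>V. lab' u \<in> Gam"
        using assms(1) unfolding partial_labeling_def lab'_def Gam_def by (auto split: option.splits)
      moreover have ag: "\<forall>u\<in>ball par w 1. \<mu> u = Some (lab' u)"
        using lab unfolding lab'_def by (metis option.simps(5))
      ultimately have "psi V par lab' w" using rh N False unfolding relaxed_happy_def by blast
      then show "good par \<mu> w" unfolding good_def using A[OF ag] by simp
    next
      assume "good par \<mu> w"
      then have "Psi par \<mu> w" using False unfolding good_def by simp
      then show "relaxed_happy Gam 1 psi V par \<mu> w"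
        unfolding relaxed_happy_def using A by blast
    qed
  qed
qed


lemma psi_alt: "psi V par lab v \<longleftrightarrow> (\<forall>u\<in>{u. par u = Some v}. lab u \<noteq> lab v) \<and>
   ((\<exists>u\<in>{u. par u = Some v}. \<exists>u'\<in>{u. par u = Some v}. lab u \<noteq> lab u') \<longrightarrow> lab v = 3)"
  unfolding psi_def Psi_def by auto

lemma psi_verifier: "is_verifier 1 psi"
  unfolding is_verifier_def
proof (intro allI impI)
  fix V par v V' par' v' and lab lab' :: "nat \<Rightarrow> nat"
  assume T: "rooted_binary_tree V par" "rooted_binary_tree V' par'" "v \<in> V" "v' \<in> V'"
    and I: "ball_iso 1 par lab v par' lab' v'"
  from I obtain f where f: "bij_betw f (ball par v 1) (ball par' v' 1)" "f v = v'"
    "\<forall>u\<in>ball par v 1. \<forall>w\<in>ball par v 1. (par u = Some w) = (par' (f u) = Some (f w))"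
    "\<forall>u\<in>ball par v 1. lab u = lab' (f u)"
    unfolding ball_iso_def by blast
  let ?C = "{u. par u = Some v}" and ?C' = "{u. par' u = Some v'}"
  have vB: "v \<in> ball par v 1" using ball1[of par v] by simp
  have CB: "?C \<subseteq> ball par v 1" using ball1[of par v] by auto
  have CB': "?C' \<subseteq> ball par' v' 1" using ball1[of par' v'] by auto
  have img: "f ` ?C = ?C'"
  proof
    show "f ` ?C \<subseteq> ?C'" using f(2,3) CB vB by auto
    show "?C' \<subseteq> f ` ?C"
    proof
      fix u' assume u': "u' \<in> ?C'"
      then have "u' \<in> ball par' v' 1" using CB' by auto
      then obtain u where u: "u \<in> ball par v 1" "f u = u'" using f(1) unfolding bij_betw_def by (metis imageE)
      then have "par u = Some v" using f(2,3) vB u' by auto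
      then show "u' \<in> f ` ?C" using u by auto
    qed
  qed
  have labC: "\<forall>u\<in>?C. lab u = lab' (f u)" using f(4) CB by auto
  have labv: "lab v = lab' v'" using f(2,4) vB by auto
  have e1: "(\<forall>u\<in>?C. lab u \<noteq> lab v) = (\<forall>u\<in>?C'. lab' u \<noteq> lab' v')"
    unfolding img[symmetric] using labC labv by auto
  have e2: "(\<exists>u\<in>?C. \<exists>u'\<in>?C. lab u \<noteq> lab u') = (\<exists>u\<in>?C'. \<exists>u'\<in>?C'. lab' u \<noteq> lab' u')"
    unfolding img[symmetric] using labC by auto
  show "psi V par lab v = psi V' par' lab' v'"
    unfolding psi_alt using e1 e2 labv by simp
qed


definition okext :: "(nat \<Rightarrow> nat option) \<Rightarrow> (nat \<Rightarrow> nat option) \<Rightarrow> nat set \<Rightarrow> (nat \<Rightarrow> nat option) \<Rightarrow> bool" where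
  "okext par \<mu> R \<mu>' \<longleftrightarrow> (\<forall>u. u \<notin> R \<longrightarrow> \<mu>' u = \<mu> u) \<and> (\<forall>u. (\<mu>' u = None) = (\<mu> u = None)) \<and>
     (\<forall>u. \<mu>' u = \<mu> u \<or> \<mu>' u \<in> Some ` Gam) \<and> (\<forall>w\<in>R. good par \<mu>' w)"

definition achv :: "(nat \<Rightarrow> nat option) \<Rightarrow> (nat \<Rightarrow> nat option) \<Rightarrow> nat \<Rightarrow> nat \<Rightarrow> nat \<Rightarrow> bool" where
  "achv par \<mu> y d z \<longleftrightarrow> (\<exists>\<mu>'. \<mu>' y = Some z \<and> okext par \<mu> (Reg par y d) \<mu>')"

lemma the_child:
  assumes "rooted_binary_tree V par" "par c = Some y" "u \<in> Reg par c d"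
  shows "(THE c'. par c' = Some y \<and> u \<in> Reg par c' d) = c"
  using assms Reg_disj[OF assms(1)] by (intro the_equality) blast+

lemma comb:
  assumes T: "rooted_binary_tree V par" and y: "y \<in> V" "\<mu> y \<noteq> None" and z: "z \<in> Gam"
    and hM: "\<And>c. par c = Some y \<Longrightarrow> okext par \<mu> (Reg par c d) (M c)"
    and gy: "good par (\<lambda>u. if u = y then Some z else if par u = Some y then M u u else \<mu> u) y"
  shows "achv par \<mu> y (Suc d) z"
proof -
  define \<mu>'' where "\<mu>'' u = (if u = y then Some z else if \<exists>c. par c = Some y \<and> u \<in> Reg par c d
      then M (THE c. par c = Some y \<and> u \<in> Reg par c d) u else \<mu> u)" for u
  have inR: "\<mu>'' u = M c u" if "par c = Some y" "u \<in> Reg par c d" for c u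
  proof -
    have "u \<noteq> y" using Reg_depth[OF T that(2)] depth_par[OF T that(1)] by auto
    then show ?thesis unfolding \<mu>''_def using the_child[OF T that] that by auto
  qed
  have outR: "\<mu>'' u = \<mu> u" if "u \<noteq> y" "\<And>c. par c = Some y \<Longrightarrow> u \<notin> Reg par c d" for u
    unfolding \<mu>''_def using that by auto
  have hM1: "\<And>c u. par c = Some y \<Longrightarrow> u \<notin> Reg par c d \<Longrightarrow> M c u = \<mu> u"
    and hM2: "\<And>c u. par c = Some y \<Longrightarrow> (M c u = None) = (\<mu> u = None)"
    and hM3: "\<And>c u. par c = Some y \<Longrightarrow> M c u = \<mu> u \<or> M c u \<in> Some ` Gam"
    and hM4: "\<And>c w. par c = Some y \<Longrightarrow> w \<in> Reg par c d \<Longrightarrow> good par (M c) w"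
    using hM unfolding okext_def by blast+
  have none: "(\<mu>'' u = None) = (\<mu> u = None)" for u
  proof (cases "u = y")
    case True then show ?thesis using y unfolding \<mu>''_def by simp
  next
    case False
    show ?thesis
    proof (cases "\<exists>c. par c = Some y \<and> u \<in> Reg par c d")
      case True
      then obtain c where "par c = Some y" "u \<in> Reg par c d" by blast
      then show ?thesis using inR hM2 by simp
    next
      case False
      then have "\<mu>'' u = \<mu> u" using outR[of u] \<open>u \<noteq> y\<close> by blast
      then show ?thesis by simp
    qed
  qed
  have vals: "\<mu>'' u = \<mu> u \<or> \<mu>'' u \<in> Some ` Gam" for u
  proof (cases "u = y")
    case True then show ?thesis using z unfolding \<mu>''_def by simp
  next
    case False
    show ?thesis
    proof (cases "\<exists>c. par c = Some y \<and> u \<in> Reg par c d")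
      case True
      then obtain c where "par c = Some y" "u \<in> Reg par c d" by blast
      then show ?thesis using inR hM3 by simp
    next
      case False
      then have "\<mu>'' u = \<mu> u" using outR[of u] \<open>u \<noteq> y\<close> by blast
      then show ?thesis by simp
    qed
  qed
  have outside: "\<mu>'' u = \<mu> u" if "u \<notin> Reg par y (Suc d)" for u
  proof -
    have h: "u \<noteq> y" "\<And>c. par c = Some y \<Longrightarrow> u \<notin> Reg par c d" using that by auto
    show ?thesis by (rule outR[OF h])
  qed
  have goody: "good par \<mu>'' y"
  proof -
    have "good par \<mu>'' y = good par (\<lambda>u. if u = y then Some z else if par u = Some y then M u u else \<mu> u) y"
    proof (rule good_cong)
      fix u
      show "(\<mu>'' u = None) = ((if u = y then Some z else if par u = Some y then M u u else \<mu> u) = None)"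
        using none hM2 y(2) by auto
    next
      show "\<mu>'' y = (if y = y then Some z else if par y = Some y then M y y else \<mu> y)"
        unfolding \<mu>''_def by simp
    next
      fix u assume u: "par u = Some y"
      then have "u \<noteq> y" using depth_par[OF T u] by auto
      then show "\<mu>'' u = (if u = y then Some z else if par u = Some y then M u u else \<mu> u)"
        using inR[OF u Reg_self] u by simp
    qed
    then show ?thesis using gy by simp
  qed
  have goodc: "good par \<mu>'' w" if c: "par c = Some y" and w: "w \<in> Reg par c d" for c w
  proof -
    have "good par \<mu>'' w = good par (M c) w"
    proof (rule good_cong)
      fix u show "(\<mu>'' u = None) = (M c u = None)" using none hM2[OF c] by simp
    next
      show "\<mu>'' w = M c w" using inR[OF c w] .
    next
      fix u assume u: "par u = Some w"
      show "\<mu>'' u = M c u"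
      proof (cases "u \<in> Reg par c d")
        case True then show ?thesis using inR[OF c] by simp
      next
        case False
        have uc: "u \<in> Reg par c (Suc d)" using Reg_child[OF w u] .
        have "u \<noteq> y" using Reg_depth[OF T uc] depth_par[OF T c] by auto
        moreover have "u \<notin> Reg par c' d" if "par c' = Some y" for c'
        proof
          assume "u \<in> Reg par c' d"
          then have "c' = c" using Reg_disj[OF T that c _ uc] by simp
          then show False using False \<open>u \<in> Reg par c' d\<close> by simp
        qed
        ultimately have "\<mu>'' u = \<mu> u" using outR by blast
        then show ?thesis using hM1[OF c False] by simp
      qed
    qed
    then show ?thesis using hM4[OF c w] by simp
  qed
  have "\<forall>w\<in>Reg par y (Suc d). good par \<mu>'' w"
    using goody goodc by auto
  moreover have "\<mu>'' y = Some z" by (simp add: \<mu>''_def)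
  ultimately show ?thesis unfolding achv_def okext_def
    using outside none vals by blast
qed


lemma rbt_fin: "rooted_binary_tree V par \<Longrightarrow> finite V"
  unfolding rooted_binary_tree_def by (elim conjE)

lemma rbt_card: "rooted_binary_tree V par \<Longrightarrow> v \<in> V \<Longrightarrow> card {u\<in>V. par u = Some v} \<le> 2"
  unfolding rooted_binary_tree_def by (elim conjE) blast

lemma children_cases:
  assumes T: "rooted_binary_tree V par" and y: "y \<in> V"
  shows "(\<forall>c. par c \<noteq> Some y) \<or> (\<exists>c. \<forall>u. par u = Some y \<longleftrightarrow> u = c) \<or>
         (\<exists>c1 c2. c1 \<noteq> c2 \<and> (\<forall>u. par u = Some y \<longleftrightarrow> u = c1 \<or> u = c2))"
proof -
  let ?S = "{u\<in>V. par u = Some y}"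
  have S: "?S = {u. par u = Some y}" using rbt_par_in[OF T] by auto
  have fin: "finite ?S" using rbt_fin[OF T] by simp
  have c2: "card ?S \<le> 2" using rbt_card[OF T y] .
  consider "card ?S = 0" | "card ?S = 1" | "card ?S = 2" using c2 by linarith
  then show ?thesis
  proof cases
    case 1
    then have "?S = {}" using fin by simp
    then have "{u. par u = Some y} = {}" using S by simp
    then have "\<forall>c. par c \<noteq> Some y" unfolding set_eq_iff by simp
    then show ?thesis by (rule disjI1)
  next
    case 2
    then obtain c where "?S = {c}" by (rule card_1_singletonE)
    then have "{u. par u = Some y} = {c}" using S by simp
    then have "\<forall>u. par u = Some y \<longleftrightarrow> u = c" unfolding set_eq_iff by simp
    then show ?thesis by (intro disjI2 disjI1 exI[of _ c])
  next
    case 3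
    then obtain c1 c2 where "c1 \<noteq> c2" "?S = {c1, c2}" unfolding card_2_iff by blast
    then have "{u. par u = Some y} = {c1, c2}" using S by simp
    then have "\<forall>u. par u = Some y \<longleftrightarrow> u = c1 \<or> u = c2" unfolding set_eq_iff by simp
    then show ?thesis using \<open>c1 \<noteq> c2\<close> by (intro disjI2 exI[of _ c1] exI[of _ c2] conjI)
  qed
qed

lemma par_neq_self:
  assumes T: "rooted_binary_tree V par" "par u = Some y" shows "u \<noteq> y"
  using depth_par[OF T] by auto

lemma ok_keep: "(\<forall>w\<in>R. good par \<mu> w) \<Longrightarrow> okext par \<mu> R \<mu>"
  unfolding okext_def by simp

lemma ach0:
  assumes "\<mu> c \<noteq> None" "z \<in> Gam" "good par (\<mu>(c := Some z)) c"
  shows "achv par \<mu> c 0 z"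
  unfolding achv_def okext_def using assms by (intro exI[of _ "\<mu>(c := Some z)"]) auto

lemma ach_keep:
  assumes "\<mu> c = Some z" "\<forall>w\<in>Reg par c d. good par \<mu> w"
  shows "achv par \<mu> c d z"
  unfolding achv_def using assms ok_keep by blast

definition big :: "(nat \<Rightarrow> bool) \<Rightarrow> bool" where
  "big A \<longleftrightarrow> (\<exists>a b. a \<noteq> b \<and> a \<in> Gam \<and> b \<in> Gam \<and> A a \<and> A b)"

definition nice :: "(nat \<Rightarrow> bool) \<Rightarrow> bool" where
  "nice A \<longleftrightarrow> A 3 \<and> (\<exists>a\<in>Gam. a \<noteq> 3 \<and> A a)"

lemma nice_big: "nice A \<Longrightarrow> big A"
proof -
  assume "nice A"
  then obtain a where a: "a \<in> Gam" "a \<noteq> 3" "A a" "A 3" unfolding nice_def by blast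
  have "(3::nat) \<in> Gam" unfolding Gam_def by simp
  then show "big A" unfolding big_def using a by blast
qed

lemma gam_pig: "a \<in> Gam \<Longrightarrow> b \<in> Gam \<Longrightarrow> c \<in> Gam \<Longrightarrow> d \<in> Gam \<Longrightarrow> a \<noteq> b \<Longrightarrow> c \<noteq> d \<Longrightarrow>
  a = c \<or> a = d \<or> b = c \<or> b = d"
  unfolding Gam_def by simp presburger

lemma big_meet: "big A \<Longrightarrow> big B \<Longrightarrow> \<exists>m\<in>Gam. A m \<and> B m"
proof -
  assume "big A" "big B"
  then obtain a b c d where "a \<noteq> b" "a \<in> Gam" "b \<in> Gam" "A a" "A b" "c \<noteq> d" "c \<in> Gam" "d \<in> Gam" "B c" "B d"
    unfolding big_def by metis
  then show ?thesis using gam_pig[of a b c d] by metis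
qed

lemma big_avoid: "big A \<Longrightarrow> \<exists>a\<in>Gam. a \<noteq> z \<and> A a"
  unfolding big_def by metis

lemma gam_avoid: "\<exists>a\<in>Gam. a \<noteq> m \<and> a \<noteq> 3"
  unfolding Gam_def by (cases "m = 1") auto

lemma pick:
  assumes "\<And>c. par c = Some y \<Longrightarrow> (\<mu> c = None \<and> okext par \<mu> (Reg par c d) \<mu>) \<or> (\<mu> c \<noteq> None \<and> achv par \<mu> c d (ch c))"
  shows "\<exists>M. (\<forall>c. par c = Some y \<longrightarrow> okext par \<mu> (Reg par c d) (M c)) \<and>
             (\<forall>c. par c = Some y \<longrightarrow> \<mu> c \<noteq> None \<longrightarrow> M c c = Some (ch c)) \<and>
             (\<forall>c. par c = Some y \<longrightarrow> \<mu> c = None \<longrightarrow> M c c = None)"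
proof -
  define M where "M c = (if \<mu> c = None then \<mu> else (SOME m. m c = Some (ch c) \<and> okext par \<mu> (Reg par c d) m))" for c
  have P: "okext par \<mu> (Reg par c d) (M c) \<and> (\<mu> c \<noteq> None \<longrightarrow> M c c = Some (ch c)) \<and> (\<mu> c = None \<longrightarrow> M c c = None)"
    if c: "par c = Some y" for c
  proof (cases "\<mu> c = None")
    case True
    then show ?thesis using assms[OF c] unfolding M_def by simp
  next
    case False
    then have "achv par \<mu> c d (ch c)" using assms[OF c] by auto
    then have ex: "\<exists>m. m c = Some (ch c) \<and> okext par \<mu> (Reg par c d) m" unfolding achv_def .
    have "M c = (SOME m. m c = Some (ch c) \<and> okext par \<mu> (Reg par c d) m)" unfolding M_def using False by auto
    then have "M c c = Some (ch c) \<and> okext par \<mu> (Reg par c d) (M c)"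
      using someI_ex[OF ex] by simp
    then show ?thesis using False by simp
  qed
  show ?thesis by (rule exI[of _ M]) (use P in blast)
qed

lemma good_simple_vac:
  assumes T: "rooted_binary_tree V par" and "\<mu> y \<noteq> None" "vac par \<mu> y"
    and "\<And>c. par c = Some y \<Longrightarrow> (M c c = None) = (\<mu> c = None)"
  shows "good par (\<lambda>u. if u = y then Some z else if par u = Some y then M u u else \<mu> u) y"
proof -
  have "vac par (\<lambda>u. if u = y then Some z else if par u = Some y then M u u else \<mu> u) y"
  proof -
    consider (p) p where "par y = Some p" "\<mu> p = None" | (c) u where "par u = Some y" "\<mu> u = None"
      using assms(2,3) unfolding vac_def by auto
    then show ?thesis
    proof cases
      case p
      have "p \<noteq> y" using par_neq_self[OF T p(1)] by simp
      moreover have "par p \<noteq> Some y"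
      proof
        assume "par p = Some y"
        then show False using depth_par[OF T p(1)] depth_par[OF T \<open>par p = Some y\<close>] by simp
      qed
      ultimately show ?thesis unfolding vac_def using p by auto
    next
      case c
      have "u \<noteq> y" using par_neq_self[OF T c(1)] by simp
      then show ?thesis unfolding vac_def using c assms(4)[OF c(1)] by auto
    qed
  qed
  then show ?thesis unfolding good_def by simp
qed

lemma good_simple_psi:
  assumes T: "rooted_binary_tree V par"
    and ch: "\<And>c. par c = Some y \<Longrightarrow> M c c = Some (ch c)"
    and c1: "\<And>u. par u = Some y \<Longrightarrow> ch u \<noteq> z"
    and c2: "(\<exists>u u'. par u = Some y \<and> par u' = Some y \<and> ch u \<noteq> ch u') \<Longrightarrow> z = 3"
  shows "good par (\<lambda>u. if u = y then Some z else if par u = Some y then M u u else \<mu> u) y"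
proof -
  have ne: "\<And>u. par u = Some y \<Longrightarrow> u \<noteq> y" using par_neq_self[OF T] by blast
  let ?g = "\<lambda>u. if u = y then Some z else if par u = Some y then M u u else \<mu> u"
  have gc: "?g u = Some (ch u)" if "par u = Some y" for u using ne[OF that] ch[OF that] that by simp
  have "Psi par ?g y"
    unfolding Psi_def
  proof (intro conjI allI impI)
    fix u assume "par u = Some y"
    then show "?g u \<noteq> ?g y" using gc c1 by simp
  next
    assume "\<exists>u u'. par u = Some y \<and> par u' = Some y \<and> ?g u \<noteq> ?g u'"
    then obtain u u' where uu: "par u = Some y" "par u' = Some y" "?g u \<noteq> ?g u'" by blast
    then have "ch u \<noteq> ch u'" using gc[OF uu(1)] gc[OF uu(2)] by simp
    then show "?g y = Some 3" using c2 uu(1,2) by auto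
  qed
  then show ?thesis unfolding good_def by simp
qed


lemma combo:
  assumes T: "rooted_binary_tree V par" and y: "y \<in> V" "\<mu> y \<noteq> None" and z: "z \<in> Gam"
    and H: "\<And>c. par c = Some y \<Longrightarrow> (\<mu> c = None \<and> (\<forall>w\<in>Reg par c d. good par \<mu> w)) \<or> (\<mu> c \<noteq> None \<and> achv par \<mu> c d (ch c))"
    and G: "vac par \<mu> y \<or> ((\<forall>u. par u = Some y \<longrightarrow> ch u \<noteq> z) \<and>
              ((\<exists>u u'. par u = Some y \<and> par u' = Some y \<and> ch u \<noteq> ch u') \<longrightarrow> z = 3))"
  shows "achv par \<mu> y (Suc d) z"
proof -
  have H': "(\<mu> c = None \<and> okext par \<mu> (Reg par c d) \<mu>) \<or> (\<mu> c \<noteq> None \<and> achv par \<mu> c d (ch c))"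
    if "par c = Some y" for c using H[OF that] ok_keep by blast
  obtain M where M1: "\<And>c. par c = Some y \<Longrightarrow> okext par \<mu> (Reg par c d) (M c)"
    and M2: "\<And>c. par c = Some y \<Longrightarrow> \<mu> c \<noteq> None \<Longrightarrow> M c c = Some (ch c)"
    and M3: "\<And>c. par c = Some y \<Longrightarrow> \<mu> c = None \<Longrightarrow> M c c = None"
    using pick[of par y \<mu> d ch, OF H'] by blast
  show ?thesis
  proof (rule comb[OF T y z M1])
    show "good par (\<lambda>u. if u = y then Some z else if par u = Some y then M u u else \<mu> u) y"
    proof (cases "vac par \<mu> y")
      case True
      show ?thesis
      proof (rule good_simple_vac[OF T y(2) True])
        fix c assume "par c = Some y"
        then show "(M c c = None) = (\<mu> c = None)" using M2 M3 by (cases "\<mu> c = None") auto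
      qed
    next
      case False
      then have lab: "\<And>c. par c = Some y \<Longrightarrow> \<mu> c \<noteq> None" unfolding vac_def by auto
      show ?thesis
      proof (rule good_simple_psi[OF T])
        show "\<And>c. par c = Some y \<Longrightarrow> M c c = Some (ch c)" using M2 lab by blast
        show "\<And>u. par u = Some y \<Longrightarrow> ch u \<noteq> z" using G False by blast
        show "\<exists>u u'. par u = Some y \<and> par u' = Some y \<and> ch u \<noteq> ch u' \<Longrightarrow> z = 3" using G False by blast
      qed
    qed
  qed
qed

lemma gam_two: "\<exists>a b. a \<noteq> b \<and> a \<in> Gam \<and> b \<in> Gam \<and> a \<noteq> e \<and> b \<noteq> e"
proof (cases "e = 1")
  case True then show ?thesis unfolding Gam_def by (intro exI[of _ 2] exI[of _ 3]) simp
next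
  case False then show ?thesis unfolding Gam_def by (intro exI[of _ 1] exI[of _ "if e = 2 then 3 else 2"]) auto
qed

lemma lvl0:
  assumes T: "rooted_binary_tree V par" and c: "\<mu> c \<noteq> None" "good par \<mu> c"
  shows "big (\<lambda>z. z \<in> Gam \<and> good par (\<mu>(c := Some z)) c) \<or> \<mu> c = Some 3"
proof (cases "vac par \<mu> c")
  case True
  have n1: "\<And>p. par c = Some p \<Longrightarrow> p \<noteq> c" and n2: "\<And>u. par u = Some c \<Longrightarrow> u \<noteq> c"
    using par_neq_self[OF T] by blast+
  have "vac par (\<mu>(c := Some z)) c" for z
    using True c(1) n1 n2 unfolding vac_def by auto
  then have "good par (\<mu>(c := Some z)) c" for z unfolding good_def by simp
  then show ?thesis unfolding big_def Gam_def by (intro disjI1 exI[of _ 1] exI[of _ 2]) simp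
next
  case False
  then have P: "Psi par \<mu> c" using c(2) unfolding good_def by simp
  show ?thesis
  proof (cases "\<exists>u u'. par u = Some c \<and> par u' = Some c \<and> \<mu> u \<noteq> \<mu> u'")
    case True
    then have "\<mu> c = Some 3" using P unfolding Psi_def by (elim conjE) (erule mp)
    then show ?thesis by (rule disjI2)
  next
    case ns: False
    have ne: "\<And>u. par u = Some c \<Longrightarrow> u \<noteq> c" using par_neq_self[OF T] by blast
    have key: "good par (\<mu>(c := Some z)) c" if "\<And>u. par u = Some c \<Longrightarrow> \<mu> u \<noteq> Some z" for z
    proof -
      have "Psi par (\<mu>(c := Some z)) c"
        unfolding Psi_def
      proof (intro conjI allI impI)
        fix u assume "par u = Some c"
        then show "(\<mu>(c := Some z)) u \<noteq> (\<mu>(c := Some z)) c" using ne that by simp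
      next
        assume "\<exists>u u'. par u = Some c \<and> par u' = Some c \<and> (\<mu>(c := Some z)) u \<noteq> (\<mu>(c := Some z)) u'"
        then obtain u u' where uu: "par u = Some c" "par u' = Some c" "(\<mu>(c := Some z)) u \<noteq> (\<mu>(c := Some z)) u'" by blast
        then have "\<mu> u \<noteq> \<mu> u'" using ne[OF uu(1)] ne[OF uu(2)] by simp
        then show "(\<mu>(c := Some z)) c = Some 3" using ns uu(1,2) by blast
      qed
      then show ?thesis unfolding good_def by simp
    qed
    show ?thesis
    proof (cases "\<exists>u0. par u0 = Some c")
      case True
      then obtain u0 where u0: "par u0 = Some c" by blast
      have "\<mu> u0 \<noteq> None" using False u0 unfolding vac_def by auto
      then obtain e where e: "\<mu> u0 = Some e" by (cases "\<mu> u0") auto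
      obtain a b where ab: "a \<noteq> b" "a \<in> Gam" "b \<in> Gam" "a \<noteq> e" "b \<noteq> e" using gam_two by blast
      have "\<mu> u = Some e" if "par u = Some c" for u
      proof -
        have "\<mu> u = \<mu> u0" using ns u0 that by blast
        then show ?thesis using e by simp
      qed
      then have "good par (\<mu>(c := Some a)) c" "good par (\<mu>(c := Some b)) c"
        using key[of a] key[of b] ab by auto
      then show ?thesis unfolding big_def using ab by blast
    next
      case False
      then have "good par (\<mu>(c := Some z)) c" for z using key by blast
      then show ?thesis unfolding big_def Gam_def by (intro disjI1 exI[of _ 1] exI[of _ 2]) simp
    qed
  qed
qed


lemma big_12: "P 1 \<Longrightarrow> P 2 \<Longrightarrow> big P"
  unfolding big_def Gam_def by (intro exI[of _ 1] exI[of _ 2]) simp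

lemma big_allbut: "(\<And>z. z \<in> Gam \<Longrightarrow> z \<noteq> m \<Longrightarrow> P z) \<Longrightarrow> big P"
  using gam_two[of m] unfolding big_def by blast

lemma nice_31: "P 3 \<Longrightarrow> P 1 \<Longrightarrow> nice P"
  unfolding nice_def Gam_def by auto

lemma gam123: "(1::nat) \<in> Gam" "(2::nat) \<in> Gam" "(3::nat) \<in> Gam"
  unfolding Gam_def by auto

lemma lemA:
  assumes T: "rooted_binary_tree V par" and y: "y \<in> V" "\<mu> y \<noteq> None"
    and G: "\<forall>w\<in>Reg par y (Suc 0). good par \<mu> w"
  shows "big (achv par \<mu> y (Suc 0))"
proof -
  have gc: "good par \<mu> c" if "par c = Some y" for c
    using G that by auto
  have R0: "\<And>c. Reg par c 0 = {c}" by simp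
  have keep: "achv par \<mu> c 0 (the (\<mu> c))" if "par c = Some y" "\<mu> c \<noteq> None" for c
    using ach_keep[of \<mu> c "the (\<mu> c)" par 0] gc[OF that(1)] that(2) by auto
  show ?thesis
  proof (cases "vac par \<mu> y")
    case True
    have "achv par \<mu> y (Suc 0) z" if z: "z \<in> Gam" for z
    proof (rule combo[where V=V and par=par and y=y and \<mu>=\<mu>, OF T y z, where ch = "\<lambda>c. the (\<mu> c)"])
      fix c assume c: "par c = Some y"
      show "(\<mu> c = None \<and> (\<forall>w\<in>Reg par c 0. good par \<mu> w)) \<or> (\<mu> c \<noteq> None \<and> achv par \<mu> c 0 (the (\<mu> c)))"
        using keep[OF c] gc[OF c] by auto
    qed (use True in blast)
    then show ?thesis using big_12 gam123 by blast
  next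
    case False
    have lab: "\<mu> c \<noteq> None" if "par c = Some y" for c using False that unfolding vac_def by auto
    have P: "Psi par \<mu> y" using False G Reg_self[of y par "Suc 0"] unfolding good_def by blast
    consider (n0) "\<forall>c. par c \<noteq> Some y" | (n1) c where "\<forall>u. par u = Some y \<longleftrightarrow> u = c"
      | (n2) c1 c2 where "c1 \<noteq> c2" "\<forall>u. par u = Some y \<longleftrightarrow> u = c1 \<or> u = c2"
      using children_cases[OF T y(1)] by blast
    then show ?thesis
    proof cases
      case n0
      have "achv par \<mu> y (Suc 0) z" if z: "z \<in> Gam" for z
        by (rule combo[where V=V and par=par and y=y and \<mu>=\<mu>, OF T y z, where ch = "\<lambda>c. 0"]) (use n0 in auto)
      then show ?thesis using big_12 gam123 by blast
    next
      case n1
      have cy: "par c = Some y" using n1 by simp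
      from lvl0[where \<mu>=\<mu> and c=c, OF T lab[OF cy] gc[OF cy]] show ?thesis
      proof
        assume B: "big (\<lambda>z. z \<in> Gam \<and> good par (\<mu>(c := Some z)) c)"
        have "achv par \<mu> y (Suc 0) z" if z: "z \<in> Gam" for z
        proof -
          obtain a where a: "a \<in> Gam" "a \<noteq> z" "good par (\<mu>(c := Some a)) c" using big_avoid[OF B, of z] by blast
          have ac: "achv par \<mu> c 0 a" by (rule ach0[where \<mu>=\<mu> and c=c, OF lab[OF cy] a(1) a(3)])
          show ?thesis
          proof (rule combo[where V=V and par=par and y=y and \<mu>=\<mu>, OF T y z, where ch = "\<lambda>u. a"])
            fix c' assume "par c' = Some y"
            then have "c' = c" using n1 by simp
            then show "(\<mu> c' = None \<and> (\<forall>w\<in>Reg par c' 0. good par \<mu> w)) \<or> (\<mu> c' \<noteq> None \<and> achv par \<mu> c' 0 a)"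
              using ac lab[OF cy] by simp
          qed (use a in auto)
        qed
        then show ?thesis using big_12 gam123 by blast
      next
        assume c3: "\<mu> c = Some 3"
        have "achv par \<mu> y (Suc 0) z" if z: "z \<in> Gam" "z \<noteq> 3" for z
        proof (rule combo[where V=V and par=par and y=y and \<mu>=\<mu>, OF T y z(1), where ch = "\<lambda>u. 3"])
          fix c' assume "par c' = Some y"
          then have "c' = c" using n1 by simp
          then show "(\<mu> c' = None \<and> (\<forall>w\<in>Reg par c' 0. good par \<mu> w)) \<or> (\<mu> c' \<noteq> None \<and> achv par \<mu> c' 0 3)"
            using keep[OF cy] c3 by simp
        qed (use z in auto)
        then show ?thesis using big_12 gam123 by simp
      qed
    next
      case n2
      have cy1: "par c1 = Some y" and cy2: "par c2 = Some y" using n2(2) by blast+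
      have onlyc: "\<And>u. par u = Some y \<Longrightarrow> u = c1 \<or> u = c2" using n2(2) by blast
      have keep3: "achv par \<mu> y (Suc 0) z" if z: "z \<in> Gam" "z \<noteq> 3" and m3: "\<mu> c1 = Some 3" "\<mu> c2 = Some 3" for z
      proof (rule combo[where V=V and par=par and y=y and \<mu>=\<mu>, OF T y z(1), where ch = "\<lambda>u. 3"])
        fix c' assume c': "par c' = Some y"
        have "\<mu> c' = Some 3" using onlyc[OF c'] m3 by blast
        then have "achv par \<mu> c' 0 3" using keep[OF c' lab[OF c']] by simp
        then show "(\<mu> c' = None \<and> (\<forall>w\<in>Reg par c' 0. good par \<mu> w)) \<or> (\<mu> c' \<noteq> None \<and> achv par \<mu> c' 0 3)"
          using lab[OF c'] by simp
      qed (use z in auto)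
      have both3: "\<mu> c1 = Some 3 \<and> \<mu> c2 = Some 3" if "\<mu> c1 = Some 3 \<or> \<mu> c2 = Some 3"
      proof -
        have ny: "\<mu> y \<noteq> Some 3" using P that cy1 cy2 unfolding Psi_def by metis
        have "\<mu> c1 = \<mu> c2"
        proof (rule ccontr)
          assume "\<mu> c1 \<noteq> \<mu> c2"
          then have "\<mu> y = Some 3" using P cy1 cy2 unfolding Psi_def by blast
          then show False using ny by simp
        qed
        then show ?thesis using that by simp
      qed
      from lvl0[where \<mu>=\<mu> and c=c1, OF T lab[OF cy1] gc[OF cy1]] lvl0[where \<mu>=\<mu> and c=c2, OF T lab[OF cy2] gc[OF cy2]]
      consider (bb) "big (\<lambda>z. z \<in> Gam \<and> good par (\<mu>(c1 := Some z)) c1)" "big (\<lambda>z. z \<in> Gam \<and> good par (\<mu>(c2 := Some z)) c2)"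
        | (t) "\<mu> c1 = Some 3 \<or> \<mu> c2 = Some 3" by blast
      then show ?thesis
      proof cases
        case t
        then have m3: "\<mu> c1 = Some 3" "\<mu> c2 = Some 3" using both3 by blast+
        show ?thesis by (rule big_12; rule keep3[OF _ _ m3]) (simp_all add: Gam_def)
      next
        case bb
        obtain m where m: "m \<in> Gam" "good par (\<mu>(c1 := Some m)) c1" "good par (\<mu>(c2 := Some m)) c2"
          using big_meet[OF bb] by blast
        have ac: "achv par \<mu> c' 0 m" if "par c' = Some y" for c'
          using onlyc[OF that] ach0[where \<mu>=\<mu> and c=c1, OF lab[OF cy1] m(1) m(2)] ach0[where \<mu>=\<mu> and c=c2, OF lab[OF cy2] m(1) m(3)] by blast
        have "achv par \<mu> y (Suc 0) z" if z: "z \<in> Gam" "z \<noteq> m" for z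
        proof (rule combo[where V=V and par=par and y=y and \<mu>=\<mu>, OF T y z(1), where ch = "\<lambda>u. m"])
          fix c' assume c': "par c' = Some y"
          show "(\<mu> c' = None \<and> (\<forall>w\<in>Reg par c' 0. good par \<mu> w)) \<or> (\<mu> c' \<noteq> None \<and> achv par \<mu> c' 0 m)"
            using ac[OF c'] lab[OF c'] by simp
        qed (use z in auto)
        then show ?thesis using big_allbut by blast
      qed
    qed
  qed
qed


lemma lemB:
  assumes T: "rooted_binary_tree V par" and y: "y \<in> V" "\<mu> y \<noteq> None"
    and H: "\<And>c. par c = Some y \<Longrightarrow> (\<mu> c = None \<and> (\<forall>w\<in>Reg par c d. good par \<mu> w)) \<or> (\<mu> c \<noteq> None \<and> big (achv par \<mu> c d))"
  shows "nice (achv par \<mu> y (Suc d))"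
proof -
  have ex: "\<exists>a. achv par \<mu> c d a" if "big (achv par \<mu> c d)" for c
    using that unfolding big_def by blast
  show ?thesis
  proof (cases "vac par \<mu> y")
    case True
    have "achv par \<mu> y (Suc d) z" if z: "z \<in> Gam" for z
    proof (rule combo[where V=V and par=par and y=y and \<mu>=\<mu>, OF T y z, where ch = "\<lambda>c. SOME a. achv par \<mu> c d a"])
      fix c assume c: "par c = Some y"
      show "(\<mu> c = None \<and> (\<forall>w\<in>Reg par c d. good par \<mu> w)) \<or> (\<mu> c \<noteq> None \<and> achv par \<mu> c d (SOME a. achv par \<mu> c d a))"
        using H[OF c] ex someI_ex by metis
    qed (use True in blast)
    then show ?thesis using nice_31 gam123 by blast
  next
    case False
    have lab: "\<mu> c \<noteq> None" if "par c = Some y" for c using False that unfolding vac_def by auto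
    have B: "big (achv par \<mu> c d)" if "par c = Some y" for c using H[OF that] lab[OF that] by blast
    have H1: "(\<mu> c = None \<and> (\<forall>w\<in>Reg par c d. good par \<mu> w)) \<or> (\<mu> c \<noteq> None \<and> achv par \<mu> c d a)"
      if "par c = Some y" "achv par \<mu> c d a" for c a using lab that by blast
    consider (n0) "\<forall>c. par c \<noteq> Some y" | (n1) c where "\<forall>u. par u = Some y \<longleftrightarrow> u = c"
      | (n2) c1 c2 where "c1 \<noteq> c2" "\<forall>u. par u = Some y \<longleftrightarrow> u = c1 \<or> u = c2"
      using children_cases[OF T y(1)] by blast
    then show ?thesis
    proof cases
      case n0
      have "achv par \<mu> y (Suc d) z" if z: "z \<in> Gam" for z
        by (rule combo[where V=V and par=par and y=y and \<mu>=\<mu>, OF T y z, where ch = "\<lambda>c. 0"]) (use n0 in auto)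
      then show ?thesis using nice_31 gam123 by blast
    next
      case n1
      have cy: "par c = Some y" using n1 by blast
      have "achv par \<mu> y (Suc d) z" if z: "z \<in> Gam" for z
      proof -
        obtain a where a: "a \<in> Gam" "a \<noteq> z" "achv par \<mu> c d a" using big_avoid[OF B[OF cy], of z] by blast
        show ?thesis
        proof (rule combo[where V=V and par=par and y=y and \<mu>=\<mu>, OF T y z, where ch = "\<lambda>u. a"])
          fix c' assume c': "par c' = Some y"
          then have "c' = c" using n1 by blast
          then show "(\<mu> c' = None \<and> (\<forall>w\<in>Reg par c' d. good par \<mu> w)) \<or> (\<mu> c' \<noteq> None \<and> achv par \<mu> c' d a)"
            using H1[OF cy a(3)] by simp
        qed (use a in auto)
      qed
      then show ?thesis using nice_31 gam123 by blast
    next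
      case n2
      have cy1: "par c1 = Some y" and cy2: "par c2 = Some y" using n2(2) by blast+
      have onlyc: "\<And>u. par u = Some y \<Longrightarrow> u = c1 \<or> u = c2" using n2(2) by blast
      obtain a1 where a1: "a1 \<in> Gam" "a1 \<noteq> 3" "achv par \<mu> c1 d a1" using big_avoid[OF B[OF cy1], of 3] by blast
      obtain a2 where a2: "a2 \<in> Gam" "a2 \<noteq> 3" "achv par \<mu> c2 d a2" using big_avoid[OF B[OF cy2], of 3] by blast
      have A3: "achv par \<mu> y (Suc d) 3"
      proof (rule combo[where V=V and par=par and y=y and \<mu>=\<mu>, OF T y gam123(3), where ch = "\<lambda>u. if u = c1 then a1 else a2"])
        fix c' assume c': "par c' = Some y"
        have "achv par \<mu> c' d (if c' = c1 then a1 else a2)" using onlyc[OF c'] a1 a2 by auto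
        then show "(\<mu> c' = None \<and> (\<forall>w\<in>Reg par c' d. good par \<mu> w)) \<or> (\<mu> c' \<noteq> None \<and> achv par \<mu> c' d (if c' = c1 then a1 else a2))"
          using H1[OF c'] by blast
      next
        show "vac par \<mu> y \<or> (\<forall>u. par u = Some y \<longrightarrow> (if u = c1 then a1 else a2) \<noteq> 3) \<and>
          ((\<exists>u u'. par u = Some y \<and> par u' = Some y \<and> (if u = c1 then a1 else a2) \<noteq> (if u' = c1 then a1 else a2)) \<longrightarrow> 3 = 3)"
          using a1 a2 by simp
      qed
      obtain m where m: "m \<in> Gam" "achv par \<mu> c1 d m" "achv par \<mu> c2 d m"
        using big_meet[OF B[OF cy1] B[OF cy2]] by blast
      obtain z where z: "z \<in> Gam" "z \<noteq> m" "z \<noteq> 3" using gam_avoid by blast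
      have Az: "achv par \<mu> y (Suc d) z"
      proof (rule combo[where V=V and par=par and y=y and \<mu>=\<mu>, OF T y z(1), where ch = "\<lambda>u. m"])
        fix c' assume c': "par c' = Some y"
        have "achv par \<mu> c' d m" using onlyc[OF c'] m by blast
        then show "(\<mu> c' = None \<and> (\<forall>w\<in>Reg par c' d. good par \<mu> w)) \<or> (\<mu> c' \<noteq> None \<and> achv par \<mu> c' d m)"
          using H1[OF c'] by blast
      qed (use z in auto)
      show ?thesis unfolding nice_def using A3 Az z by blast
    qed
  qed
qed


lemma Reg_sub: "par c = Some y \<Longrightarrow> Reg par c d \<subseteq> Reg par y (Suc d)"
  by auto

lemma Reg_cases: "w \<in> Reg par y (Suc d) \<Longrightarrow> w = y \<or> (\<exists>c. par c = Some y \<and> w \<in> Reg par c d)"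
  by auto

lemma nice3:
  assumes T: "rooted_binary_tree V par" and y: "y \<in> V" "\<mu> y \<noteq> None"
    and Tr: "\<And>w. w \<in> Reg par y 3 \<Longrightarrow> depth par y + 2 \<le> depth par w \<Longrightarrow> good par \<mu> w"
  shows "nice (achv par \<mu> y 3)"
proof -
  have three: "(3::nat) = Suc 2" by simp
  have inner: "\<forall>w\<in>Reg par g (Suc 0). good par \<mu> w" if c: "par c = Some y" and g: "par g = Some c" for c g
  proof
    fix w assume w: "w \<in> Reg par g (Suc 0)"
    have "w \<in> Reg par y 3" using w Reg_sub[of par g c "Suc 0", OF g] Reg_sub[of par c y 2, OF c] by (auto simp: numeral_eq_Suc)
    moreover have "depth par y + 2 \<le> depth par w"
      using Reg_depth[OF T w] depth_par[OF T g] depth_par[OF T c] by simp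
    ultimately show "good par \<mu> w" using Tr by blast
  qed
  show ?thesis unfolding three
  proof (rule lemB[where \<mu>=\<mu>, OF T y])
    fix c assume c: "par c = Some y"
    have cV: "c \<in> V" using rbt_par_in[OF T c] by simp
    show "(\<mu> c = None \<and> (\<forall>w\<in>Reg par c 2. good par \<mu> w)) \<or> (\<mu> c \<noteq> None \<and> big (achv par \<mu> c 2))"
    proof (cases "\<mu> c = None")
      case True
      have "good par \<mu> w" if w: "w \<in> Reg par c (Suc (Suc 0))" for w
      proof (cases "w = c")
        case True
        then show ?thesis using \<open>\<mu> c = None\<close> unfolding good_def vac_def by simp
      next
        case False
        then obtain g where g: "par g = Some c" "w \<in> Reg par g (Suc 0)" using Reg_cases[OF w] by blast
        then show ?thesis using inner[OF c g(1)] by blast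
      qed
      then show ?thesis using True by (simp add: numeral_eq_Suc)
    next
      case False
      have "nice (achv par \<mu> c (Suc (Suc 0)))"
      proof (rule lemB[where \<mu>=\<mu>, OF T cV False])
        fix g assume g: "par g = Some c"
        have gV: "g \<in> V" using rbt_par_in[OF T g] by simp
        show "(\<mu> g = None \<and> (\<forall>w\<in>Reg par g (Suc 0). good par \<mu> w)) \<or> (\<mu> g \<noteq> None \<and> big (achv par \<mu> g (Suc 0)))"
        proof (cases "\<mu> g = None")
          case True then show ?thesis using inner[OF c g] by blast
        next
          case False then show ?thesis using lemA[where \<mu>=\<mu>, OF T gV False inner[OF c g]] by blast
        qed
      qed
      then show ?thesis using False nice_big by (simp add: numeral_eq_Suc)
    qed
  qed
qed


lemma finish:
  assumes T: "rooted_binary_tree V par" and PL: "partial_labeling Gam V \<mu>" and v: "v \<in> V" "\<mu> v = None"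
    and A: "achv par (\<mu>(v := Some 1)) y D z"
    and i: "Reg par y D \<subseteq> ball par v 5"
    and ii: "v \<in> Reg par y D" "\<And>c. par c = Some v \<Longrightarrow> c \<in> Reg par y D"
    and iii: "\<And>w. par v = Some w \<Longrightarrow> w \<in> Reg par y D \<or> \<mu> w = None"
    and iv: "(\<mu>(v := Some 1)) y = Some z \<or> (\<forall>w. par y = Some w \<longrightarrow> (\<mu>(v := Some 1)) w = None)"
    and G: "\<And>w. w \<in> V \<Longrightarrow> good par \<mu> w"
  shows "\<exists>\<mu>'. is_mend Gam 1 psi 5 V par \<mu> v \<mu>'"
proof -
  define \<mu>0 where "\<mu>0 = \<mu>(v := Some 1)"
  let ?R = "Reg par y D"
  have iv': "\<mu>0 y = Some z \<or> (\<forall>w. par y = Some w \<longrightarrow> \<mu>0 w = None)" using iv unfolding \<mu>0_def .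
  obtain \<mu>' where m1: "\<mu>' y = Some z" and ok: "okext par \<mu>0 ?R \<mu>'"
    using A unfolding achv_def \<mu>0_def by blast
  have out: "\<And>u. u \<notin> ?R \<Longrightarrow> \<mu>' u = \<mu>0 u"
    and nn: "\<And>u. (\<mu>' u = None) = (\<mu>0 u = None)"
    and vals: "\<And>u. \<mu>' u = \<mu>0 u \<or> \<mu>' u \<in> Some ` Gam"
    and gR: "\<And>w. w \<in> ?R \<Longrightarrow> good par \<mu>' w"
    using ok unfolding okext_def by blast+
  have trust: "good par \<mu>0 w" if w: "w \<in> V" "w \<noteq> v" "par w \<noteq> Some v" "par v \<noteq> Some w" for w
  proof -
    have "good par \<mu>0 w = good par \<mu> w"
    proof (rule good_cong2)
      show "\<mu>0 w = \<mu> w" using w unfolding \<mu>0_def by simp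
      show "\<And>p. par w = Some p \<Longrightarrow> \<mu>0 p = \<mu> p" using w unfolding \<mu>0_def by auto
      show "\<And>u. par u = Some w \<Longrightarrow> \<mu>0 u = \<mu> u" using w unfolding \<mu>0_def by auto
    qed
    then show ?thesis using G[OF w(1)] by simp
  qed
  have PL': "partial_labeling Gam V \<mu>'"
    unfolding partial_labeling_def
  proof
    fix u assume u: "u \<in> V"
    show "\<mu>' u = None \<or> (\<exists>g\<in>Gam. \<mu>' u = Some g)"
    proof (cases "\<mu>' u = \<mu>0 u")
      case True
      then show ?thesis using PL u gam123 unfolding partial_labeling_def \<mu>0_def by auto
    next
      case False
      then show ?thesis using vals[of u] by blast
    qed
  qed
  have goodall: "good par \<mu>' w" if w: "w \<in> V" for w
  proof (cases "w \<in> ?R")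
    case True then show ?thesis using gR by blast
  next
    case wR: False
    show ?thesis
    proof (cases "\<mu>0 w = None")
      case True
      then have "\<mu>' w = None" using nn by simp
      then show ?thesis unfolding good_def vac_def by simp
    next
      case False
      have "good par \<mu>' w = good par \<mu>0 w"
      proof (rule good_cong)
        show "\<And>u. (\<mu>' u = None) = (\<mu>0 u = None)" by (rule nn)
        show "\<mu>' w = \<mu>0 w" using out[OF wR] .
        fix u assume u: "par u = Some w"
        show "\<mu>' u = \<mu>0 u"
        proof (cases "u \<in> ?R")
          case False then show ?thesis using out by blast
        next
          case True
          have "u = y" using Reg_up[OF True _ u] wR by blast
          then show ?thesis using iv' m1 u False by auto
        qed
      qed
      moreover have "good par \<mu>0 w"
      proof (rule trust[OF w])
        show "w \<noteq> v" using wR ii(1) by blast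
        show "par w \<noteq> Some v" using wR ii(2) by blast
        show "par v \<noteq> Some w"
        proof
          assume "par v = Some w"
          then have "\<mu> w = None" using iii wR by blast
          moreover have "w \<noteq> v" using wR ii(1) by blast
          ultimately show False using False unfolding \<mu>0_def by simp
        qed
      qed
      ultimately show ?thesis by simp
    qed
  qed
  have RA: "relaxed_accepts Gam 1 psi V par \<mu>'"
    unfolding relaxed_accepts_def using rh_iff[OF PL' T] goodall by blast
  have vnn: "\<mu>' v \<noteq> None" using nn unfolding \<mu>0_def by simp
  have none: "\<forall>u\<in>V. \<mu>' u = None \<longrightarrow> \<mu> u = None"
    using nn unfolding \<mu>0_def by (metis fun_upd_apply option.distinct(1))
  have diff: "\<forall>u\<in>V. \<mu>' u \<noteq> \<mu> u \<longrightarrow> u \<in> ball par v 5"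
  proof (intro ballI impI)
    fix u assume u: "u \<in> V" "\<mu>' u \<noteq> \<mu> u"
    show "u \<in> ball par v 5"
    proof (cases "u = v")
      case True then show ?thesis unfolding ball_def by (simp add: walk_le.refl)
    next
      case False
      then have "\<mu>' u \<noteq> \<mu>0 u" using u(2) unfolding \<mu>0_def by simp
      then have "u \<in> ?R" using out by blast
      then show ?thesis using i by blast
    qed
  qed
  show ?thesis unfolding is_mend_def using PL' RA vnn none diff by blast
qed


lemma mend_main:
  assumes T: "rooted_binary_tree V par" and PL: "partial_labeling Gam V \<mu>"
    and RA: "relaxed_accepts Gam 1 psi V par \<mu>" and v: "v \<in> V"
  shows "\<exists>\<mu>'. is_mend Gam 1 psi 5 V par \<mu> v \<mu>'"
proof (cases "\<mu> v = None")
  case False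
  show ?thesis unfolding is_mend_def using PL RA False by (intro exI[of _ \<mu>]) simp
next
  case vN: True
  have G: "\<And>w. w \<in> V \<Longrightarrow> good par \<mu> w"
    using RA rh_iff[OF PL T] unfolding relaxed_accepts_def by blast
  define \<mu>0 where "\<mu>0 = \<mu>(v := Some 1)"
  have trust: "good par \<mu>0 w" if w: "w \<in> V" "w \<noteq> v" "par w \<noteq> Some v" "par v \<noteq> Some w" for w
  proof -
    have "good par \<mu>0 w = good par \<mu> w"
    proof (rule good_cong2)
      show "\<mu>0 w = \<mu> w" using w unfolding \<mu>0_def by simp
      show "\<And>p. par w = Some p \<Longrightarrow> \<mu>0 p = \<mu> p" using w unfolding \<mu>0_def by auto
      show "\<And>u. par u = Some w \<Longrightarrow> \<mu>0 u = \<mu> u" using w unfolding \<mu>0_def by auto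
    qed
    then show ?thesis using G[OF w(1)] by simp
  qed
  have trust_depth: "good par \<mu>0 w" if w: "w \<in> V" "depth par v + 2 \<le> depth par w" for w
  proof (rule trust[OF w(1)])
    show "w \<noteq> v" using w by auto
    show "par w \<noteq> Some v" using w depth_par[OF T, of w v] by auto
    show "par v \<noteq> Some w" using w depth_par[OF T, of v w] by auto
  qed
  have m0v: "\<mu>0 v \<noteq> None" unfolding \<mu>0_def by simp
  have niceV: "nice (achv par \<mu>0 v 3)"
  proof (rule nice3[where \<mu>=\<mu>0, OF T v m0v])
    fix w assume "w \<in> Reg par v 3" "depth par v + 2 \<le> depth par w"
    then show "good par \<mu>0 w" using trust_depth Reg_V[OF T v] by blast
  qed
  have Rv: "\<And>c. par c = Some v \<Longrightarrow> c \<in> Reg par v 3"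
  proof -
    fix c assume "par c = Some v"
    from Reg_child[OF Reg_self[of v par 2] this] show "c \<in> Reg par v 3" by (simp add: numeral_eq_Suc)
  qed
  have Rball: "Reg par v 3 \<subseteq> ball par v 5"
  proof
    fix u assume "u \<in> Reg par v 3"
    from walk_mono[OF Reg_walk[OF this], of 2] show "u \<in> ball par v 5" unfolding ball_def by simp
  qed
  have A3: "achv par \<mu>0 v 3 3" using niceV unfolding nice_def by blast
  show ?thesis
  proof (cases "par v")
    case None
    show ?thesis
      by (rule finish[where \<mu>=\<mu>, OF T PL v vN A3[unfolded \<mu>0_def] Rball Reg_self Rv]) (use None G in auto)
  next
    case (Some p)
    show ?thesis
    proof (cases "\<mu> p")
      case None
      have "p \<noteq> v" using par_neq_self[OF T Some] by simp
      then show ?thesis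
        by (intro finish[where \<mu>=\<mu>, OF T PL v vN A3[unfolded \<mu>0_def] Rball Reg_self Rv]) (use None Some G in auto)
    next
      case (Some a)
      have pv: "par v = Some p" using \<open>par v = Some p\<close> .
      have pV: "p \<in> V" using rbt_par_in[OF T pv] by simp
      have pnv: "p \<noteq> v" using par_neq_self[OF T pv] by simp
      have m0p: "\<mu>0 p = Some a" using Some pnv unfolding \<mu>0_def by simp
      have aG: "a \<in> Gam" using PL pV Some unfolding partial_labeling_def by auto
      have trust_sib: "good par \<mu>0 w" if c: "par c = Some p" "c \<noteq> v" and w: "w \<in> Reg par c d" for c d w
      proof -
        obtain k where k: "(pstep par ^^ k) w = c" "depth par w = depth par c + k" using Reg_F1[OF T w] by blast
        have dc: "depth par c = depth par v" using depth_par[OF T c(1)] depth_par[OF T pv] by simp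
        have cV: "c \<in> V" using rbt_par_in[OF T c(1)] by simp
        show ?thesis
        proof (rule trust)
          show "w \<in> V" using Reg_V[OF T cV w] .
          show "w \<noteq> v"
          proof
            assume "w = v"
            then have "k = 0" using k(2) dc by simp
            then show False using k(1) \<open>w = v\<close> c(2) by simp
          qed
          show "par w \<noteq> Some v"
          proof
            assume wv: "par w = Some v"
            then have "k = 1" using k(2) dc depth_par[OF T wv] by simp
            then have "pstep par w = c" using k(1) by simp
            then show False using pstep_Some[of par w v] wv c(2) by simp
          qed
          show "par v \<noteq> Some w"
          proof
            assume "par v = Some w"
            then show False using depth_par[OF T \<open>par v = Some w\<close>] k(2) dc by simp
          qed
        qed
      qed
      have niceC: "nice (achv par \<mu>0 c 3)" if c: "par c = Some p" "\<mu>0 c \<noteq> None" for c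
      proof (cases "c = v")
        case True then show ?thesis using niceV by simp
      next
        case False
        have cV: "c \<in> V" using rbt_par_in[OF T c(1)] by simp
        show ?thesis
          by (rule nice3[where \<mu>=\<mu>0, OF T cV c(2)]) (use trust_sib[OF c(1) False] in blast)
      qed
      define ch where "ch u = (if a \<noteq> 3 then 3 else (SOME x. x \<in> Gam \<and> x \<noteq> 3 \<and> achv par \<mu>0 u 3 x))" for u
      have chok: "achv par \<mu>0 c 3 (ch c) \<and> ch c \<noteq> a" if c: "par c = Some p" "\<mu>0 c \<noteq> None" for c
      proof (cases "a = 3")
        case False
        then show ?thesis using niceC[OF c] unfolding ch_def nice_def by simp
      next
        case True
        have "\<exists>x. x \<in> Gam \<and> x \<noteq> 3 \<and> achv par \<mu>0 c 3 x" using niceC[OF c] unfolding nice_def by blast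
        from someI_ex[OF this] show ?thesis unfolding ch_def using True by simp
      qed
      have Ap: "achv par \<mu>0 p (Suc 3) a"
      proof (rule combo[where V=V and par=par and y=p and \<mu>=\<mu>0, OF T pV _ aG, where ch = ch])
        show "\<mu>0 p \<noteq> None" using m0p by simp
      next
        fix c assume c: "par c = Some p"
        show "(\<mu>0 c = None \<and> (\<forall>w\<in>Reg par c 3. good par \<mu>0 w)) \<or> (\<mu>0 c \<noteq> None \<and> achv par \<mu>0 c 3 (ch c))"
        proof (cases "\<mu>0 c = None")
          case True
          then have "c \<noteq> v" using m0v by auto
          then show ?thesis using True trust_sib[OF c] by blast
        next
          case False then show ?thesis using chok[OF c] by blast
        qed
      next
        show "vac par \<mu>0 p \<or> ((\<forall>u. par u = Some p \<longrightarrow> ch u \<noteq> a) \<and>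
              ((\<exists>u u'. par u = Some p \<and> par u' = Some p \<and> ch u \<noteq> ch u') \<longrightarrow> a = 3))"
        proof (cases "vac par \<mu>0 p")
          case False
          then have lab: "\<And>u. par u = Some p \<Longrightarrow> \<mu>0 u \<noteq> None" unfolding vac_def by auto
          have "\<forall>u. par u = Some p \<longrightarrow> ch u \<noteq> a" using chok lab by blast
          moreover have "(\<exists>u u'. par u = Some p \<and> par u' = Some p \<and> ch u \<noteq> ch u') \<longrightarrow> a = 3"
            unfolding ch_def by auto
          ultimately show ?thesis by blast
        qed simp
      qed
      have Rp: "Reg par p (Suc 3) \<subseteq> ball par v 5"
      proof
        fix u assume "u \<in> Reg par p (Suc 3)"
        from Reg_walk[OF this] have "walk_le par 4 p u" by simp
        moreover have "walk_le par (Suc 0) v p" using pv unfolding walk_le_1 adj_def by simp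
        ultimately have "walk_le par (Suc 0 + 4) v u" by (rule walk_trans)
        then show "u \<in> ball par v 5" unfolding ball_def by simp
      qed
      have vR: "v \<in> Reg par p (Suc 3)"
        using Reg_child[OF Reg_self[of p par 3] pv] by simp
      have v3: "v \<in> Reg par p 3"
        using Reg_child[OF Reg_self[of p par 2] pv] by (simp add: numeral_eq_Suc)
      have cR: "c \<in> Reg par p (Suc 3)" if "par c = Some v" for c
        using Reg_child[OF v3 that] .
      show ?thesis
      proof (rule finish[where \<mu>=\<mu>, OF T PL v vN Ap[unfolded \<mu>0_def] Rp vR cR])
        show "\<And>w. par v = Some w \<Longrightarrow> w \<in> Reg par p (Suc 3) \<or> \<mu> w = None" using pv Reg_self by auto
        show "(\<mu>(v := Some 1)) p = Some a \<or> (\<forall>w. par p = Some w \<longrightarrow> (\<mu>(v := Some 1)) w = None)"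
          using m0p unfolding \<mu>0_def by simp
        show "\<And>w. w \<in> V \<Longrightarrow> good par \<mu> w" by (rule G)
      qed
    qed
  qed
qed

lemma mendable: "O1_mendable Gam PiP"
  unfolding O1_mendable_def
proof (intro exI conjI)
  show "is_verifier 1 psi" by (rule psi_verifier)
  show "verifies Gam PiP psi" unfolding verifies_def PiP_def by simp
  show "\<forall>V par \<mu> v. rooted_binary_tree V par \<longrightarrow> partial_labeling Gam V \<mu> \<longrightarrow>
      relaxed_accepts Gam 1 psi V par \<mu> \<longrightarrow> v \<in> V \<longrightarrow> (\<exists>\<mu>'. is_mend Gam 1 psi 5 V par \<mu> v \<mu>')"
    using mend_main by blast
qed


section \<open>Paths and distances\<close>

lemma walk_sym: "walk_le par k a b \<Longrightarrow> walk_le par k b a"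
proof (induction k a b rule: walk_le.induct)
  case (refl k u)
  then show ?case by (rule walk_le.refl)
next
  case (step k u v w)
  have "walk_le par (Suc 0) w v" using step.hyps(2) unfolding walk_le_1 adj_def by auto
  from walk_trans[OF step.IH this] show ?case by simp
qed

lemma walk_pstep: "walk_le par k v ((pstep par ^^ k) v)"
proof (induction k)
  case 0
  then show ?case by (simp add: walk_le.refl)
next
  case (Suc k)
  let ?x = "(pstep par ^^ k) v"
  show ?case
  proof (cases "par ?x")
    case None
    then have "(pstep par ^^ Suc k) v = ?x" by (simp add: pstep_None)
    then show ?thesis using walk_mono[OF Suc.IH, of 1] by simp
  next
    case (Some p)
    then have "(pstep par ^^ Suc k) v = p" by (simp add: pstep_Some)
    moreover have "adj par ?x p" using Some unfolding adj_def by simp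
    ultimately show ?thesis using walk_le.step[OF Suc.IH] by simp
  qed
qed

lemma depth_root: "par u = None \<Longrightarrow> depth par u = 0"
  unfolding depth_def by (rule Least_eq_0) simp

lemma depth_reaches:
  assumes "rooted_binary_tree V par" "v \<in> V"
  shows "par ((pstep par ^^ depth par v) v) = None"
  unfolding depth_def using reach_root[OF assms] by (rule LeastI_ex)

lemma depth_iter:
  assumes T: "rooted_binary_tree V par" and v: "v \<in> V"
  shows "i \<le> depth par v \<Longrightarrow> (pstep par ^^ i) v \<in> V \<and> depth par ((pstep par ^^ i) v) = depth par v - i"
proof (induction i)
  case 0
  then show ?case using v by simp
next
  case (Suc i)
  let ?x = "(pstep par ^^ i) v"
  have IH: "?x \<in> V" "depth par ?x = depth par v - i" using Suc by auto
  have "depth par ?x > 0" using IH(2) Suc.prems by simp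
  then obtain p where p: "par ?x = Some p" using depth_root[of par ?x] by (cases "par ?x") auto
  have "(pstep par ^^ Suc i) v = p" using p by (simp add: pstep_Some)
  moreover have "p \<in> V" using rbt_par_in[OF T p] by simp
  moreover have "depth par p = depth par v - Suc i" using depth_par[OF T p] IH(2) by simp
  ultimately show ?case by simp
qed

lemma depth_lt_card:
  assumes T: "rooted_binary_tree V par" and v: "v \<in> V"
  shows "depth par v < card V"
proof -
  let ?f = "\<lambda>i. (pstep par ^^ i) v"
  have inj: "inj_on ?f {0..depth par v}"
  proof (rule inj_onI)
    fix i j assume "i \<in> {0..depth par v}" "j \<in> {0..depth par v}" "?f i = ?f j"
    then show "i = j" using depth_iter[OF T v, of i] depth_iter[OF T v, of j] by auto
  qed
  have sub: "?f ` {0..depth par v} \<subseteq> V" using depth_iter[OF T v] by auto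
  have "card (?f ` {0..depth par v}) = Suc (depth par v)" using card_image[OF inj] by simp
  moreover have "card (?f ` {0..depth par v}) \<le> card V" using card_mono[OF rbt_fin[OF T] sub] .
  ultimately show ?thesis by simp
qed

lemma root_unique:
  assumes T: "rooted_binary_tree V par" "a \<in> V" "par a = None" "b \<in> V" "par b = None"
  shows "a = b"
  using assms unfolding rooted_binary_tree_def by blast

lemma ball_all:
  assumes T: "rooted_binary_tree V par" and v: "v \<in> V" and u: "u \<in> V" and n: "card V \<le> n"
  shows "walk_le par (2 * n) v u"
proof -
  let ?a = "(pstep par ^^ depth par v) v" and ?b = "(pstep par ^^ depth par u) u"
  have "?a = ?b"
    using root_unique[OF T conjunct1[OF depth_iter[OF T v order.refl]] depth_reaches[OF T v]
        conjunct1[OF depth_iter[OF T u order.refl]] depth_reaches[OF T u]] .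
  moreover have "walk_le par (depth par v) v ?a" by (rule walk_pstep)
  moreover have "walk_le par (depth par u) ?b u" by (rule walk_sym[OF walk_pstep])
  ultimately have "walk_le par (depth par v + depth par u) v u" using walk_trans by metis
  moreover have "depth par v + depth par u \<le> 2 * n"
    using depth_lt_card[OF T v] depth_lt_card[OF T u] n by simp
  ultimately show ?thesis using walk_mono by (metis le_add_diff_inverse)
qed

lemma walk_in_V:
  assumes T: "rooted_binary_tree V par"
  shows "walk_le par k v u \<Longrightarrow> v \<in> V \<Longrightarrow> u \<in> V"
proof (induction k v u rule: walk_le.induct)
  case (refl k u) then show ?case by simp
next
  case (step k u x w)
  then have "x \<in> V" by simp
  then show ?case using step.hyps(2) rbt_par_in[OF T] unfolding adj_def by blast
qed

lemma ball_eq_V: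
  assumes T: "rooted_binary_tree V par" and v: "v \<in> V" and n: "card V \<le> n"
  shows "ball par v (2 * n) = V"
  unfolding ball_def using ball_all[OF T v _ n] walk_in_V[OF T _ v] by blast

lemma restrict_par:
  assumes T: "rooted_binary_tree V par"
  shows "(\<lambda>u. if u \<in> V then (case par u of Some p \<Rightarrow> if p \<in> V then Some p else None | None \<Rightarrow> None) else None) = par"
proof
  fix u
  show "(if u \<in> V then (case par u of Some p \<Rightarrow> if p \<in> V then Some p else None | None \<Rightarrow> None) else None) = par u"
  proof (cases "par u")
    case None then show ?thesis by (auto split: option.splits)
  next
    case (Some p)
    then show ?thesis using rbt_par_in[OF T Some] by simp
  qed
qed

lemma view_big:
  assumes T: "rooted_binary_tree V par" and v: "v \<in> V" and n: "card V \<le> n"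
  shows "view par (2 * n) v = (V, par)"
  unfolding view_def ball_eq_V[OF T v n] restrict_par[OF T] ..


lemma PiP_3col:
  assumes T: "rooted_binary_tree V par" and P: "PiP V par lab"
  shows "three_col V par lab"
proof -
  have A: "\<forall>v\<in>V. lab v \<in> {1,2,3}" using P unfolding PiP_def Gam_def by simp
  have B: "lab u \<noteq> lab v" if v: "v \<in> V" and u: "par v = Some u" for v u
  proof -
    have "u \<in> V" using rbt_par_in[OF T u] by simp
    then have "psi V par lab u" using P unfolding PiP_def by blast
    then have "Some (lab v) \<noteq> Some (lab u)" using u unfolding psi_def Psi_def by blast
    then show ?thesis by simp
  qed
  show ?thesis unfolding three_col_def using A B by blast
qed

lemma solvable_mono:
  assumes "\<And>V par lab. rooted_binary_tree V par \<Longrightarrow> P1 V par lab \<Longrightarrow> P2 V par lab"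
    and "solvable_in P1 c n T"
  shows "solvable_in P2 c n T"
proof -
  obtain L where L1: "\<forall>V par V' par' v. local_instance c n V par \<longrightarrow> local_instance c n V' par' \<longrightarrow> v \<in> V \<longrightarrow> v \<in> V' \<longrightarrow>
            view par T v = view par' T v \<longrightarrow> L V par v = L V' par' v"
    and L2: "\<forall>V par. local_instance c n V par \<longrightarrow> P1 V par (L V par)"
    using assms(2) unfolding solvable_in_def by blast
  have "\<forall>V par. local_instance c n V par \<longrightarrow> P2 V par (L V par)"
    using L2 assms(1) unfolding local_instance_def by blast
  then show ?thesis unfolding solvable_in_def using L1 by blast
qed

lemma exists_PiP: "\<exists>T. solvable_in PiP c n T"
proof -
  define L :: "nat set \<Rightarrow> (nat \<Rightarrow> nat option) \<Rightarrow> nat \<Rightarrow> nat" where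
    "L V par v = (if even (depth par v) then 1 else 2)" for V par v
  have loc: "L V par v = L V' par' v"
    if I: "local_instance c n V par" "local_instance c n V' par'" "v \<in> V" "v \<in> V'"
       "view par (2 * n) v = view par' (2 * n) v" for V par V' par' v
  proof -
    have T: "rooted_binary_tree V par" "card V = n" and T': "rooted_binary_tree V' par'" "card V' = n"
      using I(1,2) unfolding local_instance_def by auto
    have "(V, par) = (V', par')"
      using view_big[OF T(1) I(3)] view_big[OF T'(1) I(4)] I(5) T(2) T'(2) by simp
    then show ?thesis by simp
  qed
  have valid: "PiP V par (L V par)" if I: "local_instance c n V par" for V par
  proof -
    have T: "rooted_binary_tree V par" using I unfolding local_instance_def by auto
    have lab: "L V par v \<in> Gam" for v unfolding L_def Gam_def by simp
    have ch: "L V par u \<noteq> L V par w" if "par u = Some w" for u w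
      using depth_par[OF T that] unfolding L_def by auto
    have same: "L V par u = L V par u'" if "par u = Some w" "par u' = Some w" for u u' w
      using depth_par[OF T that(1)] depth_par[OF T that(2)] unfolding L_def by simp
    have "psi V par (L V par) w" for w
      unfolding psi_def Psi_def
    proof (intro conjI allI impI)
      fix u assume "par u = Some w"
      then show "Some (L V par u) \<noteq> Some (L V par w)" using ch by simp
    next
      assume "\<exists>u u'. par u = Some w \<and> par u' = Some w \<and> Some (L V par u) \<noteq> Some (L V par u')"
      then obtain u u' where "par u = Some w" "par u' = Some w" "L V par u \<noteq> L V par u'" by auto
      then show "Some (L V par w) = Some 3" using same by blast
    qed
    then show ?thesis unfolding PiP_def using lab by blast
  qed
  have "solvable_in PiP c n (2 * n)"
    unfolding solvable_in_def
  proof (rule exI[of _ L], intro conjI allI impI)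
    fix V par V' par' v
    assume "local_instance c n V par" "local_instance c n V' par'" "v \<in> V" "v \<in> V'"
      "view par (2 * n) v = view par' (2 * n) v"
    then show "L V par v = L V' par' v" by (rule loc)
  next
    fix V par assume "local_instance c n V par"
    then show "PiP V par (L V par)" by (rule valid)
  qed
  then show ?thesis by blast
qed


lemma view_ball: "view par T v = view par' T v \<Longrightarrow> ball par v T = ball par' v T"
  unfolding view_def by simp

lemma view_adj:
  assumes H: "view par T v = view par' T v" and x: "x \<in> ball par v T" and y: "y \<in> ball par v T"
    and p: "par x = Some y"
  shows "par' x = Some y"
proof -
  let ?B = "ball par v T"
  have B: "ball par' v T = ?B" using view_ball[OF H] by simp
  have "snd (view par T v) x = snd (view par' T v) x" using H by simp
  then have "(case par x of Some p \<Rightarrow> if p \<in> ?B then Some p else None | None \<Rightarrow> None)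
      = (case par' x of Some p \<Rightarrow> if p \<in> ?B then Some p else None | None \<Rightarrow> None)"
    using x unfolding view_def B by simp
  then have "(case par' x of Some p \<Rightarrow> if p \<in> ?B then Some p else None | None \<Rightarrow> None) = Some y"
    using y p by simp
  then show ?thesis by (cases "par' x") (auto split: if_splits)
qed

lemma view_adj':
  assumes H: "view par T v = view par' T v" and x: "x \<in> ball par v T" and y: "y \<in> ball par v T"
  shows "adj par x y \<longleftrightarrow> adj par' x y"
proof -
  have H': "view par' T v = view par T v" using H by simp
  have B: "ball par' v T = ball par v T" using view_ball[OF H] by simp
  show ?thesis unfolding adj_def
    using view_adj[OF H x y] view_adj[OF H y x] view_adj[OF H' x[folded B] y[folded B]] view_adj[OF H' y[folded B] x[folded B]]
    by blast
qed

lemma ball_trans: "w \<in> ball par v 1 \<Longrightarrow> u \<in> ball par w T \<Longrightarrow> u \<in> ball par v (Suc T)"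
  unfolding ball_def using walk_trans[of par T w u 1 v] by simp

lemma view_step:
  assumes H: "view par (Suc T) v = view par' (Suc T) v" and w: "w \<in> ball par v 1"
  shows "ball par w T \<subseteq> ball par' w T"
proof -
  have "walk_le par k a b \<Longrightarrow> a \<in> ball par v 1 \<Longrightarrow> k \<le> T \<Longrightarrow> walk_le par' k a b" for k a b
  proof (induction k a b rule: walk_le.induct)
    case (refl k u) show ?case by (rule walk_le.refl)
  next
    case (step k u x y)
    have ux: "walk_le par' k u x" using step by simp
    have wx: "x \<in> ball par u T" using step.hyps(1) step.prems(2) walk_mono[of par k u x "T - k"] unfolding ball_def by simp
    have wy: "y \<in> ball par u T" using walk_le.step[OF step.hyps] step.prems(2) walk_mono[of par "Suc k" u y "T - Suc k"] unfolding ball_def by simp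
    have "adj par' x y" using step.hyps(2) view_adj'[OF H ball_trans[OF step.prems(1) wx] ball_trans[OF step.prems(1) wy]] by simp
    then show ?case using walk_le.step[OF ux] by simp
  qed
  then show ?thesis using w unfolding ball_def by blast
qed

lemma view_child:
  assumes H: "view par (Suc T) v = view par' (Suc T) v" and w: "w \<in> ball par v 1"
  shows "view par T w = view par' T w"
proof -
  have H': "view par' (Suc T) v = view par (Suc T) v" using H by simp
  let ?B = "ball par v (Suc T)"
  have B': "ball par' v (Suc T) = ?B" using view_ball[OF H] by simp
  have vB: "v \<in> ?B" unfolding ball_def by (simp add: walk_le.refl)
  have wB: "w \<in> ?B" using w walk_mono[of par 1 v w T] unfolding ball_def by simp
  have w': "w \<in> ball par' v 1"
  proof -
    have "w = v \<or> adj par v w" using w unfolding ball_def walk_le_1[symmetric] by simp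
    then have "w = v \<or> adj par' v w" using view_adj'[OF H vB wB] by blast
    then show ?thesis unfolding ball_def using walk_le_1 by simp
  qed
  have Bw: "ball par w T = ball par' w T"
    using view_step[OF H w] view_step[OF H' w'] by blast
  have inB: "u \<in> ?B" if "u \<in> ball par w T" for u using ball_trans[OF w that] .
  have snd_eq: "(\<lambda>u. if u \<in> ball par w T then (case par u of Some p \<Rightarrow> if p \<in> ball par w T then Some p else None | None \<Rightarrow> None) else None)
     = (\<lambda>u. if u \<in> ball par w T then (case par' u of Some p \<Rightarrow> if p \<in> ball par w T then Some p else None | None \<Rightarrow> None) else None)"
  proof
    fix u
    show "(if u \<in> ball par w T then (case par u of Some p \<Rightarrow> if p \<in> ball par w T then Some p else None | None \<Rightarrow> None) else None)
     = (if u \<in> ball par w T then (case par' u of Some p \<Rightarrow> if p \<in> ball par w T then Some p else None | None \<Rightarrow> None) else None)"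
    proof (cases "u \<in> ball par w T")
      case False then show ?thesis by simp
    next
      case True
      have key: "(par u = Some p) = (par' u = Some p)" if p: "p \<in> ball par w T" for p
      proof
        assume "par u = Some p"
        then show "par' u = Some p" using view_adj[OF H inB[OF True] inB[OF p]] by simp
      next
        assume "par' u = Some p"
        then show "par u = Some p" using view_adj[OF H' inB[OF True, folded B'] inB[OF p, folded B']] by simp
      qed
      show ?thesis
      proof (cases "par u")
        case None
        then have "\<And>q. par' u = Some q \<Longrightarrow> q \<notin> ball par w T" using key by fastforce
        then show ?thesis using None True by (cases "par' u") auto
      next
        case (Some p)
        show ?thesis
        proof (cases "p \<in> ball par w T")
          case True
          then have "par' u = Some p" using key[OF True] Some by simp
          then show ?thesis using Some True by simp
        next
          case False
          have "\<And>q. par' u = Some q \<Longrightarrow> q \<notin> ball par w T" using key Some False by fastforce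
          then show ?thesis using Some False \<open>u \<in> ball par w T\<close> by (cases "par' u") auto
        qed
      qed
    qed
  qed
  show ?thesis unfolding view_def Bw[symmetric] using snd_eq by simp
qed

lemma conv:
  assumes S: "solvable_in three_col c n T"
  shows "solvable_in PiP c n (Suc T)"
proof -
  obtain L where L1: "\<And>V par V' par' v. local_instance c n V par \<Longrightarrow> local_instance c n V' par' \<Longrightarrow> v \<in> V \<Longrightarrow> v \<in> V' \<Longrightarrow>
            view par T v = view par' T v \<Longrightarrow> L V par v = L V' par' v"
    and L2: "\<And>V par. local_instance c n V par \<Longrightarrow> three_col V par (L V par)"
    using S unfolding solvable_in_def by blast
  define L' where "L' V par v = (case par v of Some p \<Rightarrow> L V par p | None \<Rightarrow> (if L V par v = 1 then 2 else 1))"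
    for V par v
  have valid: "PiP V par (L' V par)" if I: "local_instance c n V par" for V par
  proof -
    have T: "rooted_binary_tree V par" using I unfolding local_instance_def by blast
    have A: "\<And>v. v \<in> V \<Longrightarrow> L V par v \<in> {1,2,3}" and B: "\<And>v u. v \<in> V \<Longrightarrow> par v = Some u \<Longrightarrow> L V par u \<noteq> L V par v"
      using L2[OF I] unfolding three_col_def by blast+
    have lab: "L' V par v \<in> Gam" if v: "v \<in> V" for v
    proof (cases "par v")
      case None then show ?thesis unfolding L'_def Gam_def by simp
    next
      case (Some p)
      then have "p \<in> V" using rbt_par_in[OF T] by blast
      then show ?thesis using A Some unfolding L'_def Gam_def by simp
    qed
    have chv: "L' V par u = L V par w" if "par u = Some w" for u w using that unfolding L'_def by simp
    have selfv: "L' V par w \<noteq> L V par w" if w: "w \<in> V" for w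
    proof (cases "par w")
      case None then show ?thesis unfolding L'_def by simp
    next
      case (Some p) then show ?thesis using B[OF w Some] unfolding L'_def by simp
    qed
    have "psi V par (L' V par) w" if w: "w \<in> V" for w
      unfolding psi_def Psi_def
    proof (intro conjI allI impI)
      fix u assume "par u = Some w"
      then show "Some (L' V par u) \<noteq> Some (L' V par w)" using chv selfv[OF w] by simp
    next
      assume "\<exists>u u'. par u = Some w \<and> par u' = Some w \<and> Some (L' V par u) \<noteq> Some (L' V par u')"
      then obtain u u' where "par u = Some w" "par u' = Some w" "L' V par u \<noteq> L' V par u'" by auto
      then show "Some (L' V par w) = Some 3" using chv by simp
    qed
    then show ?thesis unfolding PiP_def using lab by blast
  qed
  have loc: "L' V par v = L' V' par' v"
    if I: "local_instance c n V par" "local_instance c n V' par'" "v \<in> V" "v \<in> V'"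
       and H: "view par (Suc T) v = view par' (Suc T) v" for V par V' par' v
  proof -
    have T: "rooted_binary_tree V par" and T': "rooted_binary_tree V' par'"
      using I(1,2) unfolding local_instance_def by blast+
    have H': "view par' (Suc T) v = view par (Suc T) v" using H by simp
    let ?B = "ball par v (Suc T)"
    have B': "ball par' v (Suc T) = ?B" using view_ball[OF H] by simp
    have vB: "v \<in> ?B" unfolding ball_def by (simp add: walk_le.refl)
    have v1: "v \<in> ball par v 1" unfolding ball_def by (simp add: walk_le.refl)
    have inB: "x \<in> ball P v (Suc T)" if "P v = Some x" for P x
    proof -
      have "walk_le P (Suc 0) v x" using that unfolding walk_le_1 adj_def by simp
      from walk_mono[OF this, of T] show ?thesis unfolding ball_def by simp
    qed
    have in1: "x \<in> ball par v 1" if "par v = Some x" for x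
    proof -
      have "walk_le par (Suc 0) v x" using that unfolding walk_le_1 adj_def by simp
      then show ?thesis unfolding ball_def by simp
    qed
    show ?thesis
    proof (cases "par v")
      case None
      have "par' v = None"
      proof (rule ccontr)
        assume "par' v \<noteq> None"
        then obtain q where q: "par' v = Some q" by blast
        have "par v = Some q" using view_adj[OF H' vB[folded B'] inB[of par' q, OF q] q] .
        then show False using None by simp
      qed
      moreover have "L V par v = L V' par' v"
        by (rule L1[OF I(1,2,3,4) view_child[OF H v1]])
      ultimately show ?thesis using None unfolding L'_def by simp
    next
      case (Some p)
      have p': "par' v = Some p" using view_adj[OF H vB inB[of par p, OF Some] Some] .
      have pV: "p \<in> V" using rbt_par_in[OF T Some] by simp
      have pV': "p \<in> V'" using rbt_par_in[OF T' p'] by simp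
      have "L V par p = L V' par' p"
        by (rule L1[OF I(1,2) pV pV' view_child[OF H in1[OF Some]]])
      then show ?thesis using Some p' unfolding L'_def by simp
    qed
  qed
  show ?thesis
    unfolding solvable_in_def
  proof (rule exI[of _ L'], intro conjI allI impI)
    fix V par V' par' v
    assume "local_instance c n V par" "local_instance c n V' par'" "v \<in> V" "v \<in> V'"
      "view par (Suc T) v = view par' (Suc T) v"
    then show "L' V par v = L' V' par' v" by (rule loc)
  next
    fix V par assume "local_instance c n V par"
    then show "PiP V par (L' V par)" by (rule valid)
  qed
qed


lemma mk_tree:
  fixes n :: nat and f :: "nat \<Rightarrow> nat"
  assumes n: "1 \<le> n" and f: "\<And>k. 2 \<le> k \<Longrightarrow> k \<le> n \<Longrightarrow> 1 \<le> f k \<and> f k < k"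
    and pd: "\<And>k. par k = (if 2 \<le> k \<and> k \<le> n then Some (f k) else None)"
    and ch: "\<And>m. m \<in> {1..n} \<Longrightarrow> card {u\<in>{1..n}. par u = Some m} \<le> 2"
  shows "rooted_binary_tree {1..n} par"
proof -
  have p1: "par 1 = None" using pd[of 1] by simp
  have root: "\<rho> = 1" if "\<rho> \<in> {1..n}" "par \<rho> = None" for \<rho>
    using that pd[of \<rho>] by (auto split: if_splits)
  have reach: "v \<in> {1..n} \<Longrightarrow> \<exists>k. (pstep par ^^ k) v = 1" for v
  proof (induction v rule: less_induct)
    case (less v)
    show ?case
    proof (cases "v = 1")
      case True then show ?thesis by (intro exI[of _ 0]) simp
    next
      case False
      then have v2: "2 \<le> v" "v \<le> n" using less.prems by auto
      then have pv: "par v = Some (f v)" using pd[of v] by simp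
      have fv: "f v \<in> {1..n}" "f v < v" using f[OF v2] v2 by auto
      obtain k where k: "(pstep par ^^ k) (f v) = 1" using less.IH[OF fv(2) fv(1)] by blast
      have "(pstep par ^^ Suc k) v = 1"
        unfolding funpow_Suc_right comp_def using pstep_Some[of par v "f v", OF pv] k by simp
      then show ?thesis by blast
    qed
  qed
  show ?thesis
    unfolding rooted_binary_tree_def
  proof (intro conjI ballI allI impI)
    show "finite {1..n}" by simp
    show "{1..n} \<noteq> {}" using n by simp
  next
    fix v assume "v \<notin> {1..n}"
    then show "par v = None" using pd[of v] by auto
  next
    fix v p assume "v \<in> {1..n}" "par v = Some p"
    then show "p \<in> {1..n}" using pd[of v] f[of v] by (auto split: if_splits)
  next
    show "\<exists>!\<rho>. \<rho> \<in> {1..n} \<and> par \<rho> = None"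
      using root p1 n by (intro ex1I[of _ 1]) auto
  next
    fix v assume v: "v \<in> {1..n}"
    obtain k where k: "(pstep par ^^ k) v = 1" using reach[OF v] by blast
    have "(1::nat) \<in> {1..n}" using n by simp
    then show "\<exists>k \<rho>. \<rho> \<in> {1..n} \<and> par \<rho> = None \<and> (pstep par ^^ k) v = \<rho>"
      using p1 k by blast
  next
    fix v assume "v \<in> {1..n}"
    then show "card {u \<in> {1..n}. par u = Some v} \<le> 2" by (rule ch)
  qed
qed

lemma card_le2: "S \<subseteq> {a, b} \<Longrightarrow> card S \<le> (2::nat)"
proof -
  assume "S \<subseteq> {a, b}"
  then have "card S \<le> card {a, b}" by (rule card_mono[rotated]) simp
  also have "card {a, b} \<le> 2" by (cases "a = b") auto
  finally show ?thesis .
qed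

definition parP :: "nat \<Rightarrow> nat \<Rightarrow> nat option" where
  "parP n k = (if 2 \<le> k \<and> k \<le> n then Some (k - 1) else None)"
definition parQ :: "nat \<Rightarrow> nat \<Rightarrow> nat option" where
  "parQ n k = (if 2 \<le> k \<and> k \<le> n then Some (if k = 2 then 1 else k - 2) else None)"
definition parR :: "nat \<Rightarrow> nat \<Rightarrow> nat option" where
  "parR n k = (if 2 \<le> k \<and> k \<le> n then Some (if k = 4 then 1 else k - 1) else None)"

lemma treeP: "1 \<le> n \<Longrightarrow> rooted_binary_tree {1..n} (parP n)"
proof (rule mk_tree[where f = "\<lambda>k. k - 1"])
  fix m
  have "{u \<in> {1..n}. parP n u = Some m} \<subseteq> {m + 1, m + 1}" unfolding parP_def by auto
  then show "card {u \<in> {1..n}. parP n u = Some m} \<le> 2" by (rule card_le2)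
qed (auto simp: parP_def)

lemma treeQ: "1 \<le> n \<Longrightarrow> rooted_binary_tree {1..n} (parQ n)"
proof (rule mk_tree[where f = "\<lambda>k. if k = 2 then 1 else k - 2"])
  fix m
  have "{u \<in> {1..n}. parQ n u = Some m} \<subseteq> {2, m + 2}" unfolding parQ_def by (auto split: if_splits)
  then show "card {u \<in> {1..n}. parQ n u = Some m} \<le> 2" by (rule card_le2)
qed (auto simp: parQ_def)

lemma treeR: "1 \<le> n \<Longrightarrow> rooted_binary_tree {1..n} (parR n)"
proof (rule mk_tree[where f = "\<lambda>k. if k = 4 then 1 else k - 1"])
  fix m
  have "{u \<in> {1..n}. parR n u = Some m} \<subseteq> {4, m + 1}" unfolding parR_def by (auto split: if_splits)
  then show "card {u \<in> {1..n}. parR n u = Some m} \<le> 2" by (rule card_le2)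
qed (auto simp: parR_def)

lemma view0:
  assumes T: "rooted_binary_tree V par" and x: "x \<in> V"
  shows "view par 0 x = ({x}, \<lambda>u. None)"
proof -
  have B: "ball par x 0 = {x}" unfolding ball_def using walk_le_0 walk_le.refl by blast
  have "(\<lambda>u. if u \<in> {x} then (case par u of Some p \<Rightarrow> if p \<in> {x} then Some p else None | None \<Rightarrow> None) else None) = (\<lambda>u. None)"
  proof
    fix u
    show "(if u \<in> {x} then (case par u of Some p \<Rightarrow> if p \<in> {x} then Some p else None | None \<Rightarrow> None) else None) = None"
    proof (cases "par u")
      case (Some p)
      then have "u \<noteq> p" using par_neq_self[OF T Some] by simp
      then show ?thesis using Some by auto
    next
      case None then show ?thesis by (cases "u = x") auto
    qed
  qed
  then show ?thesis unfolding view_def B by simp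
qed

lemma inst:
  assumes c: "1 \<le> c" and n: "1 \<le> n" and T: "rooted_binary_tree {1..n} par"
  shows "local_instance c n {1..n} par"
proof -
  have "n \<le> n ^ c" using self_le_power[of n c] c n by simp
  then show ?thesis unfolding local_instance_def using T by auto
qed

lemma no0:
  assumes c: "1 \<le> c" and n: "4 \<le> n"
  shows "\<not> solvable_in three_col c n 0"
proof
  assume "solvable_in three_col c n 0"
  then obtain L where L1: "\<And>V par V' par' v. local_instance c n V par \<Longrightarrow> local_instance c n V' par' \<Longrightarrow> v \<in> V \<Longrightarrow> v \<in> V' \<Longrightarrow>
            view par 0 v = view par' 0 v \<Longrightarrow> L V par v = L V' par' v"
    and L2: "\<And>V par. local_instance c n V par \<Longrightarrow> three_col V par (L V par)"
    unfolding solvable_in_def by blast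
  have n1: "1 \<le> n" using n by simp
  note TP = treeP[OF n1] and TQ = treeQ[OF n1] and TR = treeR[OF n1]
  note IP = inst[OF c n1 TP] and IQ = inst[OF c n1 TQ] and IR = inst[OF c n1 TR]
  define g where "g x = L {1..n} (parP n) x" for x
  have xin: "x \<in> {1..n}" if "1 \<le> x" "x \<le> 4" for x using that n by simp
  have gQ: "L {1..n} (parQ n) x = g x" if "1 \<le> x" "x \<le> 4" for x
    unfolding g_def using L1[OF IQ IP xin[OF that] xin[OF that]] view0[OF TQ xin[OF that]] view0[OF TP xin[OF that]] by simp
  have gR: "L {1..n} (parR n) x = g x" if "1 \<le> x" "x \<le> 4" for x
    unfolding g_def using L1[OF IR IP xin[OF that] xin[OF that]] view0[OF TR xin[OF that]] view0[OF TP xin[OF that]] by simp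
  have CP: "\<And>v u. v \<in> {1..n} \<Longrightarrow> parP n v = Some u \<Longrightarrow> g u \<noteq> g v"
    and VP: "\<And>v. v \<in> {1..n} \<Longrightarrow> g v \<in> {1,2,3}"
    using L2[OF IP] unfolding three_col_def g_def by blast+
  have CQ: "\<And>v u. v \<in> {1..n} \<Longrightarrow> parQ n v = Some u \<Longrightarrow> L {1..n} (parQ n) u \<noteq> L {1..n} (parQ n) v"
    using L2[OF IQ] unfolding three_col_def by blast
  have CR: "\<And>v u. v \<in> {1..n} \<Longrightarrow> parR n v = Some u \<Longrightarrow> L {1..n} (parR n) u \<noteq> L {1..n} (parR n) v"
    using L2[OF IR] unfolding three_col_def by blast
  have "g 1 \<noteq> g 2" using CP[of 2 1] n unfolding parP_def by simp
  moreover have "g 2 \<noteq> g 3" using CP[of 3 2] n unfolding parP_def by simp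
  moreover have "g 3 \<noteq> g 4" using CP[of 4 3] n unfolding parP_def by simp
  moreover have "g 1 \<noteq> g 3" using CQ[of 3 1] gQ[of 1] gQ[of 3] n unfolding parQ_def by simp
  moreover have "g 2 \<noteq> g 4" using CQ[of 4 2] gQ[of 2] gQ[of 4] n unfolding parQ_def by simp
  moreover have "g 1 \<noteq> g 4" using CR[of 4 1] gR[of 1] gR[of 4] n unfolding parR_def by simp
  moreover have "g 1 \<in> {1,2,3}" "g 2 \<in> {1,2,3}" "g 3 \<in> {1,2,3}" "g 4 \<in> {1,2,3}" using VP n by auto
  ultimately show False by simp presburger
qed


theorem theorem7p3:
  shows "\<exists>(\<Gamma>' :: nat set) (\<Pi>' :: problem).
           is_LCL \<Gamma>' \<Pi>' \<and>
           (\<forall>c::nat. c \<ge> 1 \<longrightarrow> same_asymptotic_complexity \<Pi>' three_col c) \<and>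
           (\<forall>V par lab. rooted_binary_tree V par \<longrightarrow> \<Pi>' V par lab \<longrightarrow> three_col V par lab) \<and>
           O1_mendable \<Gamma>' \<Pi>'"
proof (intro exI[of _ Gam] exI[of _ PiP] conjI allI impI)
  show "is_LCL Gam PiP"
    unfolding is_LCL_def
  proof (intro conjI exI)
    show "finite Gam" unfolding Gam_def by simp
    show "is_verifier 1 psi" by (rule psi_verifier)
    show "verifies Gam PiP psi" unfolding verifies_def PiP_def by simp
  qed
next
  fix V par lab assume "rooted_binary_tree V par" "PiP V par lab"
  then show "three_col V par lab" by (rule PiP_3col)
next
  show "O1_mendable Gam PiP" by (rule mendable)
next
  fix c :: nat assume c: "1 \<le> c"
  have mono3: "solvable_in three_col c n T" if "solvable_in PiP c n T" for n T
    using solvable_mono[of PiP three_col, OF PiP_3col that] by blast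
  have e1: "\<forall>n. \<exists>T. solvable_in PiP c n T" using exists_PiP by blast
  have e2: "\<forall>n. \<exists>T. solvable_in three_col c n T"
  proof
    fix n
    obtain T where "solvable_in PiP c n T" using exists_PiP by blast
    then show "\<exists>T. solvable_in three_col c n T" using mono3 by blast
  qed
  define f where "f n = round_complexity PiP c n" for n
  define g where "g n = round_complexity three_col c n" for n
  have sf: "solvable_in PiP c n (f n)" for n
  proof -
    have "\<exists>T. solvable_in PiP c n T" using e1 by blast
    then show ?thesis unfolding f_def round_complexity_def by (rule LeastI_ex)
  qed
  have sg: "solvable_in three_col c n (g n)" for n
  proof -
    have "\<exists>T. solvable_in three_col c n T" using e2 by blast
    then show ?thesis unfolding g_def round_complexity_def by (rule LeastI_ex)
  qed
  have gf: "g n \<le> f n" for n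
    unfolding g_def round_complexity_def using mono3[OF sf[of n]] by (rule Least_le)
  have fg: "f n \<le> Suc (g n)" for n
    unfolding f_def round_complexity_def using conv[OF sg[of n]] by (rule Least_le)
  have g1: "1 \<le> g n" if "4 \<le> n" for n
  proof (rule ccontr)
    assume "\<not> 1 \<le> g n"
    then have "g n = 0" by simp
    then show False using sg[of n] no0[OF c that] by simp
  qed
  have ev: "eventually (\<lambda>n. 1 * norm (real (g n)) \<le> norm (real (f n)) \<and> norm (real (f n)) \<le> 2 * norm (real (g n))) at_top"
    unfolding eventually_at_top_linorder
  proof (intro exI[of _ 4] allI impI)
    fix n :: nat assume "4 \<le> n"
    then have "1 \<le> g n" using g1 by blast
    then show "1 * norm (real (g n)) \<le> norm (real (f n)) \<and> norm (real (f n)) \<le> 2 * norm (real (g n))"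
      using gf[of n] fg[of n] by simp
  qed
  have "(\<lambda>n. real (f n)) \<in> \<Theta>(\<lambda>n. real (g n))"
    by (rule bigthetaI'[OF _ _ ev]) simp_all
  then show "same_asymptotic_complexity PiP three_col c"
    unfolding same_asymptotic_complexity_def using e1 e2 unfolding f_def g_def by blast
qed

end
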